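(* Let $(M,\gamma)$ be an $n$-dimensional (pseudo-)Riemannian manifold with local coordinates $q^a$, nondegenerate metric $\gamma_{ab}(q)$, Levi-Civita connection coefficients $\Gamma^a_{bc}(q)$, and let $Q^a(q)$ be a smooth vector field. Consider the autonomous system $$\ddot q^{a}=-\Gamma^{a}_{bc}(q)\dot q^{b}\dot q^{c}-Q^{a}(q).$$ Then each of the following functions is a first integral of this system (i.e. is constant along every solution), provided the stated conditions hold. Indices are raised and lowered with $\gamma$. (CFI 1) Let $\ell\ge 1$ be an integer. Let $L_{(N)ab}(q)$, $N=0,2,\dots,2\ell$, be symmetric tensors such that $L_{(N)(ab;c)}$ is a Killing tensor of order 3 for $N=0,2,\dots,2\ell-2$ and $L_{(2\ell)ab}$ is a Killing tensor of order 2; let $L_{(A)a}(q)$, $A=1,3,\dots,2\ell-1$, be covector fields and $G(q)$ a function satisfying $$L_{(k-1)(a;b)}=-\tfrac{3}{k-1}L_{(k-2)(ab;c)}Q^{c}-kL_{(k)ab},\quad k=2,4,\dots,2\ell,$$ $$\big(L_{(2\ell-1)c}Q^{c}\big)_{,a}=4\ell\,L_{(2\ell)ab}Q^{b},$$ $$\big(L_{(k-2)c}Q^{c}\big)_{,a}=2(k-1)L_{(k-1)ab}Q^{b}-k(k-1)L_{(k)a},\quad k=3,5,\dots,2\ell-1,$$ $$G_{,a}=2L_{(0)ab}Q^{b}-L_{(1)a}.$$ Then $$J^{(3,1)}_{\ell}=\Big(-\sum_{j=0}^{\ell-1}\tfrac{t^{2j+1}}{2j+1}L_{(2j)(ab;c)}\Big)\dot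 q^a\dot q^b\dot q^c+\Big(\sum_{j=0}^{\ell}t^{2j}L_{(2j)ab}\Big)\dot q^a\dot q^b+\Big(\sum_{j=1}^{\ell}t^{2j-1}L_{(2j-1)a}\Big)\dot q^a+\sum_{j=1}^{\ell}\tfrac{t^{2j}}{2j}L_{(2j-1)c}Q^c+G(q)$$ is a first integral. (CFI 2) Let $\ell\ge 0$ be an integer. Let $L_{(0)abc}(q)$ be a totally symmetric Killing tensor of order 3; let $L_{(N)ab}(q)$, $N=1,3,\dots,2\ell+1$, be symmetric tensors such that $L_{(N)(ab;c)}$ is a Killing tensor of order 3 for $N=1,3,\dots,2\ell-1$ and $L_{(2\ell+1)ab}$ is a Killing tensor of order 2; let $L_{(A)a}(q)$, $A=0,2,\dots,2\ell$, be covector fields satisfying $$L_{(0)(a;b)}=3L_{(0)abc}Q^{c}-L_{(1)ab},$$ $$L_{(k-1)(a;b)}=-\tfrac{3}{k-1}L_{(k-2)(ab;c)}Q^{c}-kL_{(k)ab},\quad k=3,5,\dots,2\ell+1,$$ $$\big(L_{(2\ell)c}Q^{c}\big)_{,a}=2(2\ell+1)L_{(2\ell+1)ab}Q^{b},$$ $$\big(L_{(k-2)c}Q^{c}\big)_{,a}=2(k-1)L_{(k-1)ab}Q^{b}-k(k-1)L_{(k)a},\quad k=2,4,\dots,2\ell.$$ Then $$J^{(3,2)}_{\ell}=\Big(L_{(0)abc}-\sum_{j=1}^{\ell}\tfrac{t^{2j}}{2j}L_{(2j-1)(ab;c)}\Big)\dot q^a\dot q^b\dot q^c+\Big(\sum_{j=0}^{\ell}t^{2j+1}L_{(2j+1)ab}\Big)\dot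 q^a\dot q^b+\Big(\sum_{j=0}^{\ell}t^{2j}L_{(2j)a}\Big)\dot q^a+\sum_{j=0}^{\ell}\tfrac{t^{2j+1}}{2j+1}L_{(2j)c}Q^c$$ is a first integral. (CFI 3) Let $\lambda\neq0$ be a constant, $L_{ab}(q)$ a symmetric tensor such that $L_{(ab;c)}$ is a Killing tensor of order 3, and $L_a(q)$ a covector field satisfying $$L_{(a;b)}=-\tfrac{3}{\lambda}L_{(ab;c)}Q^{c}-\lambda L_{ab},\qquad (L_cQ^c)_{,a}=2\lambda L_{ab}Q^b-\lambda^2L_a.$$ Then $$I^{(3)}_{e}=e^{\lambda t}\big(-L_{(ab;c)}\dot q^a\dot q^b\dot q^c+\lambda L_{ab}\dot q^a\dot q^b+\lambda L_a\dot q^a+L_aQ^a\big)$$ is a first integral.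
   Context: Einstein summation convention is used; a comma denotes a partial derivative, a semicolon denotes the covariant derivative of the Levi-Civita connection of $\gamma$, and round brackets around indices denote symmetrization (with weight $1/m!$). A Killing tensor of order $m$ is a totally symmetric covariant tensor $C_{a_1\dots a_m}$ with $C_{(a_1\dots a_m;b)}=0$. A first integral is a function of $(t,q,\dot q)$ whose total time derivative vanishes along every solution of the system. *)

theory Defs
  imports "HOL-Analysis.Analysis"
begin

text \<open>Everything is done in one coordinate chart: an open set U of real^'n
(the index type 'n is an arbitrary finite type, so n = CARD('n)).\<close>

type_synonym 'n pt = "real^'n"

definition pd :: "('n::finite pt \<Rightarrow> real) \<Rightarrow> 'n \<Rightarrow> 'n pt \<Rightarrow> real" where
  "pd f c x = frechet_derivative f (at x) (axis c 1)"

coinductive smooth_on_chart :: "'n::finite pt set \<Rightarrow> ('n pt \<Rightarrow> real) \<Rightarrow> bool" where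
  "\<lbrakk>\<forall>x\<in>U. f differentiable (at x); \<forall>c. smooth_on_chart U (pd f c)\<rbrakk>
     \<Longrightarrow> smooth_on_chart U f"

definition smooth1 :: "'n::finite pt set \<Rightarrow> ('n pt \<Rightarrow> 'n \<Rightarrow> real) \<Rightarrow> bool" where
  "smooth1 U T \<longleftrightarrow> (\<forall>a. smooth_on_chart U (\<lambda>x. T x a))"

definition smooth2 :: "'n::finite pt set \<Rightarrow> ('n pt \<Rightarrow> 'n \<Rightarrow> 'n \<Rightarrow> real) \<Rightarrow> bool" where
  "smooth2 U T \<longleftrightarrow> (\<forall>a b. smooth_on_chart U (\<lambda>x. T x a b))"

definition smooth3 :: "'n::finite pt set \<Rightarrow> ('n pt \<Rightarrow> 'n \<Rightarrow> 'n \<Rightarrow> 'n \<Rightarrow> real) \<Rightarrow> bool" where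
  "smooth3 U T \<longleftrightarrow> (\<forall>a b c. smooth_on_chart U (\<lambda>x. T x a b c))"

definition metric_on :: "'n::finite pt set \<Rightarrow> ('n pt \<Rightarrow> real^'n^'n) \<Rightarrow> bool" where
  "metric_on U g \<longleftrightarrow> open U \<and> smooth2 U (\<lambda>x a b. g x $ a $ b)
     \<and> (\<forall>x\<in>U. transpose (g x) = g x \<and> det (g x) \<noteq> 0)"

definition christoffel :: "('n::finite pt \<Rightarrow> real^'n^'n) \<Rightarrow> 'n pt \<Rightarrow> 'n \<Rightarrow> 'n \<Rightarrow> 'n \<Rightarrow> real" where
  "christoffel g x a b c =
     (\<Sum>d\<in>UNIV. matrix_inv (g x) $ a $ d *
        (pd (\<lambda>y. g y $ d $ c) b x + pd (\<lambda>y. g y $ d $ b) c x - pd (\<lambda>y. g y $ b $ c) d x)) / 2"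

text \<open>Covariant derivatives; the derivative index is the last one.\<close>
definition cd1 :: "('n::finite pt \<Rightarrow> real^'n^'n) \<Rightarrow> ('n pt \<Rightarrow> 'n \<Rightarrow> real) \<Rightarrow> 'n pt \<Rightarrow> 'n \<Rightarrow> 'n \<Rightarrow> real" where
  "cd1 g w x a b = pd (\<lambda>y. w y a) b x - (\<Sum>c\<in>UNIV. christoffel g x c a b * w x c)"

definition cd2 :: "('n::finite pt \<Rightarrow> real^'n^'n) \<Rightarrow> ('n pt \<Rightarrow> 'n \<Rightarrow> 'n \<Rightarrow> real) \<Rightarrow> 'n pt \<Rightarrow> 'n \<Rightarrow> 'n \<Rightarrow> 'n \<Rightarrow> real" where
  "cd2 g T x a b c = pd (\<lambda>y. T y a b) c x
     - (\<Sum>d\<in>UNIV. christoffel g x d c a * T x d b)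
     - (\<Sum>d\<in>UNIV. christoffel g x d c b * T x a d)"

definition cd3 :: "('n::finite pt \<Rightarrow> real^'n^'n) \<Rightarrow> ('n pt \<Rightarrow> 'n \<Rightarrow> 'n \<Rightarrow> 'n \<Rightarrow> real) \<Rightarrow> 'n pt \<Rightarrow> 'n \<Rightarrow> 'n \<Rightarrow> 'n \<Rightarrow> 'n \<Rightarrow> real" where
  "cd3 g T x a b c d = pd (\<lambda>y. T y a b c) d x
     - (\<Sum>e\<in>UNIV. christoffel g x e d a * T x e b c)
     - (\<Sum>e\<in>UNIV. christoffel g x e d b * T x a e c)
     - (\<Sum>e\<in>UNIV. christoffel g x e d c * T x a b e)"

definition sym2 :: "('n \<Rightarrow> 'n \<Rightarrow> real) \<Rightarrow> 'n \<Rightarrow> 'n \<Rightarrow> real" where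
  "sym2 T a b = (T a b + T b a) / 2"

definition sym3 :: "('n \<Rightarrow> 'n \<Rightarrow> 'n \<Rightarrow> real) \<Rightarrow> 'n \<Rightarrow> 'n \<Rightarrow> 'n \<Rightarrow> real" where
  "sym3 T a b c = (\<Sum>p\<in>{p. p permutes {..<3::nat}}.
       T ([a,b,c] ! p 0) ([a,b,c] ! p 1) ([a,b,c] ! p 2)) / fact 3"

definition sym4 :: "('n \<Rightarrow> 'n \<Rightarrow> 'n \<Rightarrow> 'n \<Rightarrow> real) \<Rightarrow> 'n \<Rightarrow> 'n \<Rightarrow> 'n \<Rightarrow> 'n \<Rightarrow> real" where
  "sym4 T a b c d = (\<Sum>p\<in>{p. p permutes {..<4::nat}}.
       T ([a,b,c,d] ! p 0) ([a,b,c,d] ! p 1) ([a,b,c,d] ! p 2) ([a,b,c,d] ! p 3)) / fact 4"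

definition symcd2 :: "('n::finite pt \<Rightarrow> real^'n^'n) \<Rightarrow> ('n pt \<Rightarrow> 'n \<Rightarrow> 'n \<Rightarrow> real) \<Rightarrow> 'n pt \<Rightarrow> 'n \<Rightarrow> 'n \<Rightarrow> 'n \<Rightarrow> real" where
  "symcd2 g L x = sym3 (cd2 g L x)"

definition killing2 :: "'n::finite pt set \<Rightarrow> ('n pt \<Rightarrow> real^'n^'n) \<Rightarrow> ('n pt \<Rightarrow> 'n \<Rightarrow> 'n \<Rightarrow> real) \<Rightarrow> bool" where
  "killing2 U g C \<longleftrightarrow> (\<forall>x\<in>U. \<forall>a b. C x a b = C x b a)
     \<and> (\<forall>x\<in>U. \<forall>a b c. sym3 (cd2 g C x) a b c = 0)"

definition killing3 :: "'n::finite pt set \<Rightarrow> ('n pt \<Rightarrow> real^'n^'n) \<Rightarrow> ('n pt \<Rightarrow> 'n \<Rightarrow> 'n \<Rightarrow> 'n \<Rightarrow> real) \<Rightarrow> bool" where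
  "killing3 U g C \<longleftrightarrow> (\<forall>x\<in>U. \<forall>a b c. C x a b c = C x b a c \<and> C x a b c = C x a c b)
     \<and> (\<forall>x\<in>U. \<forall>a b c d. sym4 (cd3 g C x) a b c d = 0)"

definition is_solution :: "'n::finite pt set \<Rightarrow> ('n pt \<Rightarrow> real^'n^'n) \<Rightarrow> ('n pt \<Rightarrow> real^'n)
     \<Rightarrow> real set \<Rightarrow> (real \<Rightarrow> real^'n) \<Rightarrow> (real \<Rightarrow> real^'n) \<Rightarrow> bool" where
  "is_solution U g Q I q v \<longleftrightarrow> open I \<and> (\<forall>t\<in>I. q t \<in> U
     \<and> (q has_vector_derivative v t) (at t)
     \<and> (v has_vector_derivative
          (\<chi> a. - (\<Sum>b\<in>UNIV. \<Sum>c\<in>UNIV. christoffel g (q t) a b c * v t $ b * v t $ c) - Q (q t) $ a)) (at t))"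

definition first_integral :: "'n::finite pt set \<Rightarrow> ('n pt \<Rightarrow> real^'n^'n) \<Rightarrow> ('n pt \<Rightarrow> real^'n)
     \<Rightarrow> (real \<Rightarrow> 'n pt \<Rightarrow> real^'n \<Rightarrow> real) \<Rightarrow> bool" where
  "first_integral U g Q J \<longleftrightarrow> (\<forall>I q v. is_solution U g Q I q v \<longrightarrow>
     (\<forall>t\<in>I. ((\<lambda>s. J s (q s) (v s)) has_real_derivative 0) (at t)))"

end

theory Submission
  imports Defs
begin


lemma smooth_diff: "smooth_on_chart U f \<Longrightarrow> x \<in> U \<Longrightarrow> f differentiable (at x)"
  by (erule smooth_on_chart.cases) auto

lemma smooth_pd: "smooth_on_chart U f \<Longrightarrow> smooth_on_chart U (pd f c)"
  by (erule smooth_on_chart.cases) auto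

lemma comp_deriv:
  assumes "(v has_vector_derivative w) (at t)"
  shows "((\<lambda>s. v s $ a) has_real_derivative w $ a) (at t)"
proof -
  have "((\<lambda>s. v s $ a) has_derivative (\<lambda>h. (h *\<^sub>R w) $ a)) (at t)"
    using bounded_linear.has_derivative[OF bounded_linear_vec_nth, of v "\<lambda>h. h *\<^sub>R w" "at t" a] assms
    by (simp add: has_vector_derivative_def)
  then show ?thesis by (rule has_derivative_imp_has_field_derivative) simp
qed

lemma chain_pd:
  fixes f :: "real^'n::finite \<Rightarrow> real"
  assumes f: "f differentiable (at (q t))" and q: "(q has_vector_derivative w) (at t)"
  shows "((\<lambda>s. f (q s)) has_real_derivative (\<Sum>c\<in>UNIV. pd f c (q t) * w $ c)) (at t)"
proof -
  let ?f' = "frechet_derivative f (at (q t))"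
  have fd: "(f has_derivative ?f') (at (q t))" using f frechet_derivative_works by blast
  have lin: "linear ?f'" using fd has_derivative_linear by blast
  have qd: "(q has_derivative (\<lambda>h. h *\<^sub>R w)) (at t)" using q by (simp add: has_vector_derivative_def)
  have "((\<lambda>s. f (q s)) has_derivative (\<lambda>h. ?f' (h *\<^sub>R w))) (at t)"
    using has_derivative_compose[OF qd fd] by (simp add: o_def)
  moreover have "?f' (h *\<^sub>R w) = h * (\<Sum>c\<in>UNIV. pd f c (q t) * w $ c)" for h
  proof -
    have "?f' (h *\<^sub>R w) = h * ?f' w" using lin by (simp add: linear_scale)
    moreover have "?f' w = ?f' (\<Sum>c\<in>UNIV. w $ c *\<^sub>R axis c 1)"
      using basis_expansion[of w] by (simp add: scalar_mult_eq_scaleR)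
    moreover have "\<dots> = (\<Sum>c\<in>UNIV. w $ c * ?f' (axis c 1))"
      using lin by (simp add: linear_sum linear_scale)
    ultimately show ?thesis by (simp add: pd_def mult.commute)
  qed
  ultimately have "((\<lambda>s. f (q s)) has_derivative (\<lambda>h. h * (\<Sum>c\<in>UNIV. pd f c (q t) * w $ c))) (at t)"
    by simp
  then show ?thesis by (rule has_derivative_imp_has_field_derivative) simp
qed

lemma differentiable_prod':
  fixes f :: "'i \<Rightarrow> 'a::real_normed_vector \<Rightarrow> real"
  assumes "finite S" "\<And>i. i \<in> S \<Longrightarrow> f i differentiable (at x)"
  shows "(\<lambda>y. \<Prod>i\<in>S. f i y) differentiable (at x)"
  using assms by (induction S rule: finite_induct) auto

lemma det_differentiable:
  fixes M :: "real^'m \<Rightarrow> real^'n::finite^'n"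
  assumes "\<And>i j. (\<lambda>y. M y $ i $ j) differentiable (at x)"
  shows "(\<lambda>y. det (M y)) differentiable (at x)"
  unfolding det_def
  by (intro differentiable_sum ballI differentiable_mult differentiable_const differentiable_prod' assms) auto



lemma matrix_inv_works:
  fixes A :: "real^'n::finite^'n"
  assumes "det A \<noteq> 0"
  shows "A ** matrix_inv A = mat 1 \<and> matrix_inv A ** A = mat 1"
proof -
  have "invertible A" using assms invertible_det_nz by blast
  then show ?thesis unfolding matrix_inv_def invertible_def by (rule someI_ex)
qed

lemma matrix_inv_cramer:
  fixes A :: "real^'n::finite^'n"
  assumes d: "det A \<noteq> 0"
  shows "matrix_inv A $ i $ j = det (\<chi> r s. if s = i then axis j 1 $ r else A $ r $ s) / det A"
proof -
  have "A *v (matrix_inv A *v axis j 1) = axis j 1"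
    using matrix_inv_works[OF d] by (simp add: matrix_vector_mul_assoc)
  then have "matrix_inv A *v axis j 1 = (\<chi> k. det(\<chi> r s. if s=k then axis j 1 $ r else A$r$s) / det A)"
    using cramer[OF d] by blast
  moreover have "(matrix_inv A *v axis j 1) $ i = matrix_inv A $ i $ j"
    by (simp add: matrix_vector_mult_def axis_def if_distrib cong: if_cong)
  ultimately show ?thesis by simp
qed

lemma matrix_inv_differentiable:
  fixes A :: "real^'m \<Rightarrow> real^'n::finite^'n"
  assumes U: "open U" "x \<in> U" and d: "\<And>y. y \<in> U \<Longrightarrow> det (A y) \<noteq> 0"
    and diff: "\<And>i j. (\<lambda>y. A y $ i $ j) differentiable (at x)"
  shows "(\<lambda>y. matrix_inv (A y) $ i $ j) differentiable (at x)"
proof -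
  let ?F = "\<lambda>y. det (\<chi> r s. if s = i then axis j 1 $ r else A y $ r $ s) / det (A y)"
  have "?F differentiable (at x)"
  proof (intro differentiable_divide det_differentiable)
    fix r s
    show "(\<lambda>y. (\<chi> r s. if s = i then axis j 1 $ r else A y $ r $ s) $ r $ s) differentiable (at x)"
      by (cases "s = i") (simp_all add: diff)
  qed (use diff d[OF U(2)] in auto)
  then obtain D where "(?F has_derivative D) (at x)" unfolding differentiable_def by blast
  then have "((\<lambda>y. matrix_inv (A y) $ i $ j) has_derivative D) (at x)"
    by (rule has_derivative_transform_within_open[OF _ U]) (simp add: matrix_inv_cramer d)
  then show ?thesis unfolding differentiable_def by blast
qed


lemma metric_diff:
  assumes "metric_on U g" "x \<in> U"
  shows "(\<lambda>y. g y $ a $ b) differentiable (at x)"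
    and "(\<lambda>y. pd (\<lambda>y. g y $ a $ b) c y) differentiable (at x)"
  using assms unfolding metric_on_def smooth2_def
  by (auto intro: smooth_diff smooth_pd)

lemma christoffel_diff:
  assumes m: "metric_on U g" and x: "x \<in> U"
  shows "(\<lambda>y. christoffel g y a b c) differentiable (at x)"
proof -
  have U: "open U" and d: "\<And>y. y \<in> U \<Longrightarrow> det (g y) \<noteq> 0" using m unfolding metric_on_def by auto
  have inv: "(\<lambda>y. matrix_inv (g y) $ i $ j) differentiable (at x)" for i j
    by (rule matrix_inv_differentiable[OF U x d metric_diff(1)[OF m x]])
  show ?thesis unfolding christoffel_def
    by (intro differentiable_divide differentiable_sum ballI differentiable_mult differentiable_add
        differentiable_diff inv metric_diff[OF m x]) auto
qed

lemma cd2_diff: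
  assumes m: "metric_on U g" and x: "x \<in> U" and T: "smooth2 U T"
  shows "(\<lambda>y. cd2 g T y a b c) differentiable (at x)"
proof -
  have Td: "(\<lambda>y. T y i j) differentiable (at x)" "(\<lambda>y. pd (\<lambda>y. T y i j) k y) differentiable (at x)" for i j k
    using T x unfolding smooth2_def by (auto intro: smooth_diff smooth_pd)
  show ?thesis unfolding cd2_def
    by (intro differentiable_sum ballI differentiable_mult differentiable_diff Td
        christoffel_diff[OF m x]) auto
qed

lemma symcd2_diff:
  assumes m: "metric_on U g" and x: "x \<in> U" and T: "smooth2 U T"
  shows "(\<lambda>y. symcd2 g T y a b c) differentiable (at x)"
  unfolding symcd2_def sym3_def
  by (intro differentiable_divide differentiable_sum ballI cd2_diff[OF m x T]) (auto intro: finite_permutations)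


lemma sum2_prod: "(\<Sum>a\<in>(UNIV::'a::finite set). \<Sum>b\<in>(UNIV::'b::finite set). F a b) = (\<Sum>(a,b)\<in>UNIV. F a b)"
  by (simp add: sum.cartesian_product)
lemma sum3_prod: "(\<Sum>a\<in>(UNIV::'a::finite set). \<Sum>b\<in>(UNIV::'b::finite set). \<Sum>c\<in>(UNIV::'c::finite set). F a b c) = (\<Sum>(a,b,c)\<in>UNIV. F a b c)"
  by (simp add: sum.cartesian_product sum2_prod)
lemma sum4_prod: "(\<Sum>a\<in>(UNIV::'a::finite set). \<Sum>b\<in>(UNIV::'b::finite set). \<Sum>c\<in>(UNIV::'c::finite set). \<Sum>d\<in>(UNIV::'d::finite set). F a b c d) = (\<Sum>(a,b,c,d)\<in>UNIV. F a b c d)"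
  by (simp add: sum.cartesian_product sum3_prod)
lemma sum5_prod: "(\<Sum>a\<in>(UNIV::'a::finite set). \<Sum>b\<in>(UNIV::'b::finite set). \<Sum>c\<in>(UNIV::'c::finite set). \<Sum>d\<in>(UNIV::'d::finite set). \<Sum>e\<in>(UNIV::'e::finite set). F a b c d e) = (\<Sum>(a,b,c,d,e)\<in>UNIV. F a b c d e)"
  by (simp add: sum.cartesian_product sum4_prod)

definition acc :: "('n::finite pt \<Rightarrow> real^'n^'n) \<Rightarrow> ('n pt \<Rightarrow> real^'n) \<Rightarrow> 'n pt \<Rightarrow> real^'n \<Rightarrow> real^'n" where
  "acc g Q x w = (\<chi> a. - (\<Sum>b\<in>UNIV. \<Sum>c\<in>UNIV. christoffel g x a b c * w $ b * w $ c) - Q x $ a)"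

lemma D2:
  fixes W :: "real^'n::finite \<Rightarrow> 'n \<Rightarrow> real"
  assumes hq: "(q has_vector_derivative v t) (at t)"
    and hv: "(v has_vector_derivative acc g Q (q t) (v t)) (at t)"
    and W: "\<And>a. (\<lambda>y. W y a) differentiable (at (q t))"
  shows "((\<lambda>s. \<Sum>a\<in>UNIV. W (q s) a * v s $ a) has_real_derivative
     ((\<Sum>a\<in>UNIV. \<Sum>b\<in>UNIV. cd1 g W (q t) a b * v t $ a * v t $ b) - (\<Sum>a\<in>UNIV. W (q t) a * Q (q t) $ a))) (at t)"
proof -
  let ?x = "q t" and ?w = "v t"
  have "((\<lambda>s. \<Sum>a\<in>UNIV. W (q s) a * v s $ a) has_real_derivative
     (\<Sum>a\<in>UNIV. (\<Sum>c\<in>UNIV. pd (\<lambda>y. W y a) c ?x * ?w $ c) * ?w $ a + acc g Q ?x ?w $ a * W ?x a)) (at t)"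
    by (intro DERIV_sum DERIV_mult chain_pd W hq comp_deriv hv)
  moreover
  have e1: "(\<Sum>a\<in>UNIV. (\<Sum>c\<in>UNIV. pd (\<lambda>y. W y a) c ?x * ?w $ c) * ?w $ a)
      = (\<Sum>a\<in>UNIV. \<Sum>b\<in>UNIV. pd (\<lambda>y. W y a) b ?x * ?w $ a * ?w $ b)"
    by (simp add: sum_distrib_right sum_distrib_left mult_ac)
  have e2: "(\<Sum>a\<in>UNIV. W ?x a * (\<Sum>b\<in>UNIV. \<Sum>c\<in>UNIV. christoffel g ?x a b c * ?w $ b * ?w $ c))
      = (\<Sum>a\<in>UNIV. \<Sum>b\<in>UNIV. (\<Sum>c\<in>UNIV. christoffel g ?x c a b * W ?x c) * ?w $ a * ?w $ b)"
    apply (simp only: sum_distrib_left sum_distrib_right sum3_prod)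
    apply (rule sum.reindex_bij_witness[where i="\<lambda>(a,b,c). (c,a,b)" and j="\<lambda>(a,b,c). (b,c,a)"])
    apply (auto simp: mult_ac)
    done
  have "(\<Sum>a\<in>UNIV. (\<Sum>c\<in>UNIV. pd (\<lambda>y. W y a) c ?x * ?w $ c) * ?w $ a + acc g Q ?x ?w $ a * W ?x a)
     = (\<Sum>a\<in>UNIV. (\<Sum>c\<in>UNIV. pd (\<lambda>y. W y a) c ?x * ?w $ c) * ?w $ a)
       - (\<Sum>a\<in>UNIV. W ?x a * (\<Sum>b\<in>UNIV. \<Sum>c\<in>UNIV. christoffel g ?x a b c * ?w $ b * ?w $ c))
       - (\<Sum>a\<in>UNIV. W ?x a * Q ?x $ a)"
    by (simp add: acc_def sum.distrib sum_subtractf algebra_simps)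
  moreover have "(\<Sum>a\<in>UNIV. \<Sum>b\<in>UNIV. cd1 g W ?x a b * ?w $ a * ?w $ b)
     = (\<Sum>a\<in>UNIV. \<Sum>b\<in>UNIV. pd (\<lambda>y. W y a) b ?x * ?w $ a * ?w $ b)
      - (\<Sum>a\<in>UNIV. \<Sum>b\<in>UNIV. (\<Sum>c\<in>UNIV. christoffel g ?x c a b * W ?x c) * ?w $ a * ?w $ b)"
    by (simp add: cd1_def sum_subtractf algebra_simps)
  ultimately show ?thesis using e1 e2 by simp
qed


lemma D3:
  fixes T :: "real^'n::finite \<Rightarrow> 'n \<Rightarrow> 'n \<Rightarrow> real"
  assumes hq: "(q has_vector_derivative v t) (at t)"
    and hv: "(v has_vector_derivative acc g Q (q t) (v t)) (at t)"
    and T: "\<And>a b. (\<lambda>y. T y a b) differentiable (at (q t))"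
  shows "((\<lambda>s. \<Sum>a\<in>UNIV. \<Sum>b\<in>UNIV. T (q s) a b * v s $ a * v s $ b) has_real_derivative
     ((\<Sum>a\<in>UNIV. \<Sum>b\<in>UNIV. \<Sum>c\<in>UNIV. cd2 g T (q t) a b c * v t $ a * v t $ b * v t $ c)
      - (\<Sum>a\<in>UNIV. \<Sum>b\<in>UNIV. T (q t) a b * (Q (q t) $ a * v t $ b + v t $ a * Q (q t) $ b)))) (at t)"
proof -
  let ?x = "q t" and ?w = "v t"
  let ?G = "\<lambda>a. \<Sum>b\<in>UNIV. \<Sum>c\<in>UNIV. christoffel g ?x a b c * ?w $ b * ?w $ c"
  have "((\<lambda>s. \<Sum>a\<in>UNIV. \<Sum>b\<in>UNIV. T (q s) a b * v s $ a * v s $ b) has_real_derivative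
     (\<Sum>a\<in>UNIV. \<Sum>b\<in>UNIV. ((\<Sum>c\<in>UNIV. pd (\<lambda>y. T y a b) c ?x * ?w $ c) * ?w $ a + acc g Q ?x ?w $ a * T ?x a b) * ?w $ b
        + acc g Q ?x ?w $ b * (T ?x a b * ?w $ a))) (at t)"
    by (intro DERIV_sum DERIV_mult chain_pd T hq comp_deriv hv)
  moreover
  have e1: "(\<Sum>a\<in>UNIV. \<Sum>b\<in>UNIV. (\<Sum>c\<in>UNIV. pd (\<lambda>y. T y a b) c ?x * ?w $ c) * ?w $ a * ?w $ b)
      = (\<Sum>a\<in>UNIV. \<Sum>b\<in>UNIV. \<Sum>c\<in>UNIV. pd (\<lambda>y. T y a b) c ?x * ?w $ a * ?w $ b * ?w $ c)"
    by (simp add: sum_distrib_right sum_distrib_left mult_ac)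
  have e2: "(\<Sum>a\<in>UNIV. \<Sum>b\<in>UNIV. T ?x a b * ?G a * ?w $ b)
      = (\<Sum>a\<in>UNIV. \<Sum>b\<in>UNIV. \<Sum>c\<in>UNIV. (\<Sum>d\<in>UNIV. christoffel g ?x d c a * T ?x d b) * ?w $ a * ?w $ b * ?w $ c)"
    apply (simp only: sum_distrib_left sum_distrib_right sum4_prod)
    apply (rule sum.reindex_bij_witness[where i="\<lambda>(a,b,c,d). (d,b,c,a)" and j="\<lambda>(a,b,c,d). (d,b,c,a)"])
    apply (auto simp: mult_ac)
    done
  have e3: "(\<Sum>a\<in>UNIV. \<Sum>b\<in>UNIV. T ?x a b * ?w $ a * ?G b)
      = (\<Sum>a\<in>UNIV. \<Sum>b\<in>UNIV. \<Sum>c\<in>UNIV. (\<Sum>d\<in>UNIV. christoffel g ?x d c b * T ?x a d) * ?w $ a * ?w $ b * ?w $ c)"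
    apply (simp only: sum_distrib_left sum_distrib_right sum4_prod)
    apply (rule sum.reindex_bij_witness[where i="\<lambda>(a,b,c,d). (a,d,c,b)" and j="\<lambda>(a,b,c,d). (a,d,c,b)"])
    apply (auto simp: mult_ac)
    done
  have "(\<Sum>a\<in>UNIV. \<Sum>b\<in>UNIV. ((\<Sum>c\<in>UNIV. pd (\<lambda>y. T y a b) c ?x * ?w $ c) * ?w $ a + acc g Q ?x ?w $ a * T ?x a b) * ?w $ b
        + acc g Q ?x ?w $ b * (T ?x a b * ?w $ a))
     = (\<Sum>a\<in>UNIV. \<Sum>b\<in>UNIV. (\<Sum>c\<in>UNIV. pd (\<lambda>y. T y a b) c ?x * ?w $ c) * ?w $ a * ?w $ b)
       - (\<Sum>a\<in>UNIV. \<Sum>b\<in>UNIV. T ?x a b * ?G a * ?w $ b)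
       - (\<Sum>a\<in>UNIV. \<Sum>b\<in>UNIV. T ?x a b * ?w $ a * ?G b)
       - (\<Sum>a\<in>UNIV. \<Sum>b\<in>UNIV. T ?x a b * (Q ?x $ a * ?w $ b + ?w $ a * Q ?x $ b))"
    by (simp add: acc_def sum.distrib sum_subtractf algebra_simps)
  moreover have "(\<Sum>a\<in>UNIV. \<Sum>b\<in>UNIV. \<Sum>c\<in>UNIV. cd2 g T ?x a b c * ?w $ a * ?w $ b * ?w $ c)
     = (\<Sum>a\<in>UNIV. \<Sum>b\<in>UNIV. \<Sum>c\<in>UNIV. pd (\<lambda>y. T y a b) c ?x * ?w $ a * ?w $ b * ?w $ c)
      - (\<Sum>a\<in>UNIV. \<Sum>b\<in>UNIV. \<Sum>c\<in>UNIV. (\<Sum>d\<in>UNIV. christoffel g ?x d c a * T ?x d b) * ?w $ a * ?w $ b * ?w $ c)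
      - (\<Sum>a\<in>UNIV. \<Sum>b\<in>UNIV. \<Sum>c\<in>UNIV. (\<Sum>d\<in>UNIV. christoffel g ?x d c b * T ?x a d) * ?w $ a * ?w $ b * ?w $ c)"
    by (simp add: cd2_def sum_subtractf sum.distrib algebra_simps)
  ultimately show ?thesis using e1 e2 e3 by simp
qed

lemma D4:
  fixes C :: "real^'n::finite \<Rightarrow> 'n \<Rightarrow> 'n \<Rightarrow> 'n \<Rightarrow> real"
  assumes hq: "(q has_vector_derivative v t) (at t)"
    and hv: "(v has_vector_derivative acc g Q (q t) (v t)) (at t)"
    and C: "\<And>a b c. (\<lambda>y. C y a b c) differentiable (at (q t))"
  shows "((\<lambda>s. \<Sum>a\<in>UNIV. \<Sum>b\<in>UNIV. \<Sum>c\<in>UNIV. C (q s) a b c * v s $ a * v s $ b * v s $ c) has_real_derivative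
     ((\<Sum>a\<in>UNIV. \<Sum>b\<in>UNIV. \<Sum>c\<in>UNIV. \<Sum>d\<in>UNIV. cd3 g C (q t) a b c d * v t $ a * v t $ b * v t $ c * v t $ d)
      - (\<Sum>a\<in>UNIV. \<Sum>b\<in>UNIV. \<Sum>c\<in>UNIV. C (q t) a b c *
          (Q (q t) $ a * v t $ b * v t $ c + v t $ a * Q (q t) $ b * v t $ c + v t $ a * v t $ b * Q (q t) $ c)))) (at t)"
proof -
  let ?x = "q t" and ?w = "v t"
  let ?G = "\<lambda>a. \<Sum>b\<in>UNIV. \<Sum>c\<in>UNIV. christoffel g ?x a b c * ?w $ b * ?w $ c"
  have "((\<lambda>s. \<Sum>a\<in>UNIV. \<Sum>b\<in>UNIV. \<Sum>c\<in>UNIV. C (q s) a b c * v s $ a * v s $ b * v s $ c) has_real_derivative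
     (\<Sum>a\<in>UNIV. \<Sum>b\<in>UNIV. \<Sum>c\<in>UNIV. (((\<Sum>d\<in>UNIV. pd (\<lambda>y. C y a b c) d ?x * ?w $ d) * ?w $ a + acc g Q ?x ?w $ a * C ?x a b c) * ?w $ b
        + acc g Q ?x ?w $ b * (C ?x a b c * ?w $ a)) * ?w $ c + acc g Q ?x ?w $ c * (C ?x a b c * ?w $ a * ?w $ b))) (at t)"
    by (intro DERIV_sum DERIV_mult chain_pd C hq comp_deriv hv)
  moreover
  have e1: "(\<Sum>a\<in>UNIV. \<Sum>b\<in>UNIV. \<Sum>c\<in>UNIV. (\<Sum>d\<in>UNIV. pd (\<lambda>y. C y a b c) d ?x * ?w $ d) * ?w $ a * ?w $ b * ?w $ c)
      = (\<Sum>a\<in>UNIV. \<Sum>b\<in>UNIV. \<Sum>c\<in>UNIV. \<Sum>d\<in>UNIV. pd (\<lambda>y. C y a b c) d ?x * ?w $ a * ?w $ b * ?w $ c * ?w $ d)"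
    by (simp add: sum_distrib_right sum_distrib_left mult_ac)
  have e2: "(\<Sum>a\<in>UNIV. \<Sum>b\<in>UNIV. \<Sum>c\<in>UNIV. C ?x a b c * ?G a * ?w $ b * ?w $ c)
      = (\<Sum>a\<in>UNIV. \<Sum>b\<in>UNIV. \<Sum>c\<in>UNIV. \<Sum>d\<in>UNIV. (\<Sum>e\<in>UNIV. christoffel g ?x e d a * C ?x e b c) * ?w $ a * ?w $ b * ?w $ c * ?w $ d)"
    apply (simp only: sum_distrib_left sum_distrib_right sum5_prod)
    apply (rule sum.reindex_bij_witness[where i="\<lambda>(a,b,c,d,e). (e,b,c,d,a)" and j="\<lambda>(a,b,c,d,e). (e,b,c,d,a)"])
    apply (auto simp: mult_ac)
    done
  have e3: "(\<Sum>a\<in>UNIV. \<Sum>b\<in>UNIV. \<Sum>c\<in>UNIV. C ?x a b c * ?w $ a * ?G b * ?w $ c)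
      = (\<Sum>a\<in>UNIV. \<Sum>b\<in>UNIV. \<Sum>c\<in>UNIV. \<Sum>d\<in>UNIV. (\<Sum>e\<in>UNIV. christoffel g ?x e d b * C ?x a e c) * ?w $ a * ?w $ b * ?w $ c * ?w $ d)"
    apply (simp only: sum_distrib_left sum_distrib_right sum5_prod)
    apply (rule sum.reindex_bij_witness[where i="\<lambda>(a,b,c,d,e). (a,e,c,d,b)" and j="\<lambda>(a,b,c,d,e). (a,e,c,d,b)"])
    apply (auto simp: mult_ac)
    done
  have e4: "(\<Sum>a\<in>UNIV. \<Sum>b\<in>UNIV. \<Sum>c\<in>UNIV. C ?x a b c * ?w $ a * ?w $ b * ?G c)
      = (\<Sum>a\<in>UNIV. \<Sum>b\<in>UNIV. \<Sum>c\<in>UNIV. \<Sum>d\<in>UNIV. (\<Sum>e\<in>UNIV. christoffel g ?x e d c * C ?x a b e) * ?w $ a * ?w $ b * ?w $ c * ?w $ d)"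
    apply (simp only: sum_distrib_left sum_distrib_right sum5_prod)
    apply (rule sum.reindex_bij_witness[where i="\<lambda>(a,b,c,d,e). (a,b,e,d,c)" and j="\<lambda>(a,b,c,d,e). (a,b,e,d,c)"])
    apply (auto simp: mult_ac)
    done
  have "(\<Sum>a\<in>UNIV. \<Sum>b\<in>UNIV. \<Sum>c\<in>UNIV. (((\<Sum>d\<in>UNIV. pd (\<lambda>y. C y a b c) d ?x * ?w $ d) * ?w $ a + acc g Q ?x ?w $ a * C ?x a b c) * ?w $ b
        + acc g Q ?x ?w $ b * (C ?x a b c * ?w $ a)) * ?w $ c + acc g Q ?x ?w $ c * (C ?x a b c * ?w $ a * ?w $ b))
     = (\<Sum>a\<in>UNIV. \<Sum>b\<in>UNIV. \<Sum>c\<in>UNIV. (\<Sum>d\<in>UNIV. pd (\<lambda>y. C y a b c) d ?x * ?w $ d) * ?w $ a * ?w $ b * ?w $ c)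
       - (\<Sum>a\<in>UNIV. \<Sum>b\<in>UNIV. \<Sum>c\<in>UNIV. C ?x a b c * ?G a * ?w $ b * ?w $ c)
       - (\<Sum>a\<in>UNIV. \<Sum>b\<in>UNIV. \<Sum>c\<in>UNIV. C ?x a b c * ?w $ a * ?G b * ?w $ c)
       - (\<Sum>a\<in>UNIV. \<Sum>b\<in>UNIV. \<Sum>c\<in>UNIV. C ?x a b c * ?w $ a * ?w $ b * ?G c)
       - (\<Sum>a\<in>UNIV. \<Sum>b\<in>UNIV. \<Sum>c\<in>UNIV. C ?x a b c *
          (Q ?x $ a * ?w $ b * ?w $ c + ?w $ a * Q ?x $ b * ?w $ c + ?w $ a * ?w $ b * Q ?x $ c))"
    by (simp add: acc_def sum.distrib sum_subtractf algebra_simps)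
  moreover have "(\<Sum>a\<in>UNIV. \<Sum>b\<in>UNIV. \<Sum>c\<in>UNIV. \<Sum>d\<in>UNIV. cd3 g C ?x a b c d * ?w $ a * ?w $ b * ?w $ c * ?w $ d)
     = (\<Sum>a\<in>UNIV. \<Sum>b\<in>UNIV. \<Sum>c\<in>UNIV. \<Sum>d\<in>UNIV. pd (\<lambda>y. C y a b c) d ?x * ?w $ a * ?w $ b * ?w $ c * ?w $ d)
      - (\<Sum>a\<in>UNIV. \<Sum>b\<in>UNIV. \<Sum>c\<in>UNIV. \<Sum>d\<in>UNIV. (\<Sum>e\<in>UNIV. christoffel g ?x e d a * C ?x e b c) * ?w $ a * ?w $ b * ?w $ c * ?w $ d)
      - (\<Sum>a\<in>UNIV. \<Sum>b\<in>UNIV. \<Sum>c\<in>UNIV. \<Sum>d\<in>UNIV. (\<Sum>e\<in>UNIV. christoffel g ?x e d b * C ?x a e c) * ?w $ a * ?w $ b * ?w $ c * ?w $ d)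
      - (\<Sum>a\<in>UNIV. \<Sum>b\<in>UNIV. \<Sum>c\<in>UNIV. \<Sum>d\<in>UNIV. (\<Sum>e\<in>UNIV. christoffel g ?x e d c * C ?x a b e) * ?w $ a * ?w $ b * ?w $ c * ?w $ d)"
    by (simp add: cd3_def sum_subtractf sum.distrib algebra_simps)
  ultimately show ?thesis using e1 e2 e3 e4 by simp
qed


lemma list_perm_sum:
  fixes F :: "'n list \<Rightarrow> real"
  assumes p: "p permutes {..<m}"
  shows "(\<Sum>xs\<in>{xs. length xs = m}. F (map (\<lambda>i. xs ! p i) [0..<m])) = (\<Sum>xs\<in>{xs. length xs = m}. F xs)"
proof (rule sum.reindex_bij_witness[where j="\<lambda>xs. map (\<lambda>i. xs ! p i) [0..<m]" and i="\<lambda>xs. map (\<lambda>i. xs ! inv p i) [0..<m]"])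
  have pi: "\<And>i. i < m \<Longrightarrow> p i < m" and ipi: "\<And>i. i < m \<Longrightarrow> inv p i < m"
    using permutes_in_image[OF p] permutes_in_image[OF permutes_inv[OF p]] by auto
  have inv1: "\<And>i. p (inv p i) = i" and inv2: "\<And>i. inv p (p i) = i"
    using permutes_inverses[OF p] by auto
  fix xs assume "xs \<in> {xs. length xs = m}"
  then have l: "length xs = m" by simp
  show "map (\<lambda>i. map (\<lambda>i. xs ! p i) [0..<m] ! inv p i) [0..<m] = xs"
    by (rule nth_equalityI) (auto simp: l ipi inv1)
  show "map (\<lambda>i. map (\<lambda>i. xs ! inv p i) [0..<m] ! p i) [0..<m] = xs"
    by (rule nth_equalityI) (auto simp: l pi inv2)
qed auto

lemma prod3: "(\<Prod>i<(3::nat). f i) = f 0 * f 1 * (f 2::real)"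
  by (simp add: numeral_3_eq_3 eval_nat_numeral)
lemma prod4: "(\<Prod>i<(4::nat). f i) = f 0 * f 1 * f 2 * (f 3::real)"
  by (simp add: eval_nat_numeral mult_ac)

lemma len3: "length xs = 3 \<Longrightarrow> xs = [xs!0, xs!1, xs!2]"
  by (cases xs; cases "tl xs"; cases "tl (tl xs)") (auto simp: numeral_3_eq_3)
lemma len4: "length xs = 4 \<Longrightarrow> xs = [xs!0, xs!1, xs!2, xs!3]"
  by (cases xs; cases "tl xs"; cases "tl (tl xs)"; cases "tl (tl (tl xs))") (auto simp: eval_nat_numeral)

lemma conv3: "(\<Sum>a\<in>(UNIV::'n::finite set). \<Sum>b\<in>UNIV. \<Sum>c\<in>UNIV. G [a,b,c]) = (\<Sum>xs\<in>{xs. length xs = 3}. (G xs :: real))"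
  unfolding sum3_prod
  by (rule sum.reindex_bij_witness[where j="\<lambda>(a,b,c). [a,b,c]" and i="\<lambda>xs. (xs!0, xs!1, xs!2)"])
     (auto dest: len3)
lemma conv4: "(\<Sum>a\<in>(UNIV::'n::finite set). \<Sum>b\<in>UNIV. \<Sum>c\<in>UNIV. \<Sum>d\<in>UNIV. G [a,b,c,d]) = (\<Sum>xs\<in>{xs. length xs = 4}. (G xs :: real))"
  unfolding sum4_prod
  by (rule sum.reindex_bij_witness[where j="\<lambda>(a,b,c,d). [a,b,c,d]" and i="\<lambda>xs. (xs!0, xs!1, xs!2, xs!3)"])
     (auto dest: len4)

lemma sym3_contract:
  fixes T :: "'n::finite \<Rightarrow> 'n \<Rightarrow> 'n \<Rightarrow> real"
  shows "(\<Sum>a\<in>UNIV. \<Sum>b\<in>UNIV. \<Sum>c\<in>UNIV. sym3 T a b c * w a * w b * w c)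
       = (\<Sum>a\<in>UNIV. \<Sum>b\<in>UNIV. \<Sum>c\<in>UNIV. T a b c * w a * w b * w c)"
proof -
  let ?P = "{p. p permutes {..<3::nat}}"
  let ?F = "\<lambda>xs. T (xs!0) (xs!1) (xs!2) * (\<Prod>i<3. w (xs!i))"
  have fin: "finite ?P" by (rule finite_permutations) simp
  have card: "card ?P = fact 3" by (rule card_permutations) simp_all
  have each: "(\<Sum>a\<in>UNIV. \<Sum>b\<in>UNIV. \<Sum>c\<in>UNIV. T ([a,b,c] ! p 0) ([a,b,c] ! p 1) ([a,b,c] ! p 2) * w a * w b * w c)
       = (\<Sum>a\<in>UNIV. \<Sum>b\<in>UNIV. \<Sum>c\<in>UNIV. T a b c * w a * w b * w c)" if p: "p permutes {..<3}" for p
  proof -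
    have "(\<Sum>a\<in>UNIV. \<Sum>b\<in>UNIV. \<Sum>c\<in>UNIV. T ([a,b,c] ! p 0) ([a,b,c] ! p 1) ([a,b,c] ! p 2) * w a * w b * w c)
        = (\<Sum>xs\<in>{xs. length xs = 3}. ?F (map (\<lambda>i. xs ! p i) [0..<3]))"
    proof -
      have pl: "p i < 3" if "i < 3" for i using permutes_in_image[OF p] that by auto
      have "?F (map (\<lambda>i. xs ! p i) [0..<3]) = T (xs ! p 0) (xs ! p 1) (xs ! p 2) * (\<Prod>i<3. w (xs ! i))"
        if "length xs = 3" for xs :: "'n list"
      proof -
        have "(\<Prod>i<3. w (map (\<lambda>i. xs ! p i) [0..<3] ! i)) = (\<Prod>i<3. w (xs ! p i))" by simp
        also have "\<dots> = (\<Prod>i<3. w (xs ! i))"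
          using prod.permute[OF p, of "\<lambda>i. w (xs ! i)"] by (simp add: o_def lessThan_def)
        finally show ?thesis by (simp add: upt_rec numeral_2_eq_2)
      qed
      then show ?thesis unfolding conv3[symmetric, where G="\<lambda>xs. T (xs ! p 0) (xs ! p 1) (xs ! p 2) * (\<Prod>i<3. w (xs ! i))"]
        conv3[symmetric] by (simp add: prod3 mult_ac)
    qed
    also have "\<dots> = (\<Sum>xs\<in>{xs. length xs = 3}. ?F xs)" by (rule list_perm_sum[OF p])
    also have "\<dots> = (\<Sum>a\<in>UNIV. \<Sum>b\<in>UNIV. \<Sum>c\<in>UNIV. T a b c * w a * w b * w c)"
      unfolding conv3[symmetric] by (simp add: prod3 mult_ac)
    finally show ?thesis .
  qed
  have "(\<Sum>a\<in>UNIV. \<Sum>b\<in>UNIV. \<Sum>c\<in>UNIV. sym3 T a b c * w a * w b * w c)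
     = (\<Sum>a\<in>UNIV. \<Sum>b\<in>UNIV. \<Sum>c\<in>UNIV. \<Sum>p\<in>?P. T ([a,b,c] ! p 0) ([a,b,c] ! p 1) ([a,b,c] ! p 2) / fact 3 * w a * w b * w c)"
    unfolding sym3_def sum_divide_distrib sum_distrib_right ..
  also have "\<dots> = (\<Sum>p\<in>?P. \<Sum>a\<in>UNIV. \<Sum>b\<in>UNIV. \<Sum>c\<in>UNIV. T ([a,b,c] ! p 0) ([a,b,c] ! p 1) ([a,b,c] ! p 2) / fact 3 * w a * w b * w c)"
    by (simp only: sum.swap[where B="?P"])
  also have "\<dots> = (\<Sum>p\<in>?P. \<Sum>a\<in>UNIV. \<Sum>b\<in>UNIV. \<Sum>c\<in>UNIV. T ([a,b,c] ! p 0) ([a,b,c] ! p 1) ([a,b,c] ! p 2) * w a * w b * w c) / fact 3"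
    by (simp add: sum_divide_distrib)
  also have "\<dots> = (\<Sum>p\<in>?P. \<Sum>a\<in>UNIV. \<Sum>b\<in>UNIV. \<Sum>c\<in>UNIV. T a b c * w a * w b * w c) / fact 3"
    by (intro arg_cong[where f="\<lambda>x. x / fact 3"] sum.cong refl each) simp
  also have "\<dots> = (\<Sum>a\<in>UNIV. \<Sum>b\<in>UNIV. \<Sum>c\<in>UNIV. T a b c * w a * w b * w c)"
    using card by simp
  finally show ?thesis .
qed

lemma sym4_contract:
  fixes T :: "'n::finite \<Rightarrow> 'n \<Rightarrow> 'n \<Rightarrow> 'n \<Rightarrow> real"
  shows "(\<Sum>a\<in>UNIV. \<Sum>b\<in>UNIV. \<Sum>c\<in>UNIV. \<Sum>d\<in>UNIV. sym4 T a b c d * w a * w b * w c * w d)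
       = (\<Sum>a\<in>UNIV. \<Sum>b\<in>UNIV. \<Sum>c\<in>UNIV. \<Sum>d\<in>UNIV. T a b c d * w a * w b * w c * w d)"
proof -
  let ?P = "{p. p permutes {..<4::nat}}"
  let ?F = "\<lambda>xs. T (xs!0) (xs!1) (xs!2) (xs!3) * (\<Prod>i<4. w (xs!i))"
  have fin: "finite ?P" by (rule finite_permutations) simp
  have card: "card ?P = fact 4" by (rule card_permutations) simp_all
  have each: "(\<Sum>a\<in>UNIV. \<Sum>b\<in>UNIV. \<Sum>c\<in>UNIV. \<Sum>d\<in>UNIV. T ([a,b,c,d] ! p 0) ([a,b,c,d] ! p 1) ([a,b,c,d] ! p 2) ([a,b,c,d] ! p 3) * w a * w b * w c * w d)
       = (\<Sum>a\<in>UNIV. \<Sum>b\<in>UNIV. \<Sum>c\<in>UNIV. \<Sum>d\<in>UNIV. T a b c d * w a * w b * w c * w d)" if p: "p permutes {..<4}" for p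
  proof -
    have "(\<Sum>a\<in>UNIV. \<Sum>b\<in>UNIV. \<Sum>c\<in>UNIV. \<Sum>d\<in>UNIV. T ([a,b,c,d] ! p 0) ([a,b,c,d] ! p 1) ([a,b,c,d] ! p 2) ([a,b,c,d] ! p 3) * w a * w b * w c * w d)
        = (\<Sum>xs\<in>{xs. length xs = 4}. ?F (map (\<lambda>i. xs ! p i) [0..<4]))"
    proof -
      have pl: "p i < 4" if "i < 4" for i using permutes_in_image[OF p] that by auto
      have "?F (map (\<lambda>i. xs ! p i) [0..<4]) = T (xs ! p 0) (xs ! p 1) (xs ! p 2) (xs ! p 3) * (\<Prod>i<4. w (xs ! i))"
        if "length xs = 4" for xs :: "'n list"
      proof -
        have "(\<Prod>i<4. w (map (\<lambda>i. xs ! p i) [0..<4] ! i)) = (\<Prod>i<4. w (xs ! p i))" by simp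
        also have "\<dots> = (\<Prod>i<4. w (xs ! i))"
          using prod.permute[OF p, of "\<lambda>i. w (xs ! i)"] by (simp add: o_def lessThan_def)
        finally show ?thesis by (simp add: upt_rec numeral_2_eq_2 numeral_3_eq_3)
      qed
      then show ?thesis unfolding conv4[symmetric, where G="\<lambda>xs. T (xs ! p 0) (xs ! p 1) (xs ! p 2) (xs ! p 3) * (\<Prod>i<4. w (xs ! i))"]
        conv4[symmetric] by (simp add: prod4 mult_ac)
    qed
    also have "\<dots> = (\<Sum>xs\<in>{xs. length xs = 4}. ?F xs)" by (rule list_perm_sum[OF p])
    also have "\<dots> = (\<Sum>a\<in>UNIV. \<Sum>b\<in>UNIV. \<Sum>c\<in>UNIV. \<Sum>d\<in>UNIV. T a b c d * w a * w b * w c * w d)"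
      unfolding conv4[symmetric] by (simp add: prod4 mult_ac)
    finally show ?thesis .
  qed
  have "(\<Sum>a\<in>UNIV. \<Sum>b\<in>UNIV. \<Sum>c\<in>UNIV. \<Sum>d\<in>UNIV. sym4 T a b c d * w a * w b * w c * w d)
     = (\<Sum>a\<in>UNIV. \<Sum>b\<in>UNIV. \<Sum>c\<in>UNIV. \<Sum>d\<in>UNIV. \<Sum>p\<in>?P. T ([a,b,c,d] ! p 0) ([a,b,c,d] ! p 1) ([a,b,c,d] ! p 2) ([a,b,c,d] ! p 3) / fact 4 * w a * w b * w c * w d)"
    unfolding sym4_def sum_divide_distrib sum_distrib_right ..
  also have "\<dots> = (\<Sum>p\<in>?P. \<Sum>a\<in>UNIV. \<Sum>b\<in>UNIV. \<Sum>c\<in>UNIV. \<Sum>d\<in>UNIV. T ([a,b,c,d] ! p 0) ([a,b,c,d] ! p 1) ([a,b,c,d] ! p 2) ([a,b,c,d] ! p 3) / fact 4 * w a * w b * w c * w d)"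
    by (simp only: sum.swap[where B="?P"])
  also have "\<dots> = (\<Sum>p\<in>?P. \<Sum>a\<in>UNIV. \<Sum>b\<in>UNIV. \<Sum>c\<in>UNIV. \<Sum>d\<in>UNIV. T ([a,b,c,d] ! p 0) ([a,b,c,d] ! p 1) ([a,b,c,d] ! p 2) ([a,b,c,d] ! p 3) * w a * w b * w c * w d) / fact 4"
    by (simp add: sum_divide_distrib)
  also have "\<dots> = (\<Sum>p\<in>?P. \<Sum>a\<in>UNIV. \<Sum>b\<in>UNIV. \<Sum>c\<in>UNIV. \<Sum>d\<in>UNIV. T a b c d * w a * w b * w c * w d) / fact 4"
    by (intro arg_cong[where f="\<lambda>x. x / fact 4"] sum.cong refl each) simp
  also have "\<dots> = (\<Sum>a\<in>UNIV. \<Sum>b\<in>UNIV. \<Sum>c\<in>UNIV. \<Sum>d\<in>UNIV. T a b c d * w a * w b * w c * w d)"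
    using card by simp
  finally show ?thesis .
qed



definition c1 :: "('n::finite pt \<Rightarrow> 'n \<Rightarrow> real) \<Rightarrow> 'n pt \<Rightarrow> real^'n \<Rightarrow> real" where
  "c1 W x w = (\<Sum>a\<in>UNIV. W x a * w$a)"
definition c2 :: "('n::finite pt \<Rightarrow> 'n \<Rightarrow> 'n \<Rightarrow> real) \<Rightarrow> 'n pt \<Rightarrow> real^'n \<Rightarrow> real" where
  "c2 T x w = (\<Sum>a\<in>UNIV. \<Sum>b\<in>UNIV. T x a b * w$a * w$b)"
definition c3 :: "('n::finite pt \<Rightarrow> 'n \<Rightarrow> 'n \<Rightarrow> 'n \<Rightarrow> real) \<Rightarrow> 'n pt \<Rightarrow> real^'n \<Rightarrow> real" where
  "c3 C x w = (\<Sum>a\<in>UNIV. \<Sum>b\<in>UNIV. \<Sum>c\<in>UNIV. C x a b c * w$a * w$b * w$c)"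
definition KQ :: "('n::finite pt \<Rightarrow> 'n \<Rightarrow> 'n \<Rightarrow> 'n \<Rightarrow> real) \<Rightarrow> 'n pt \<Rightarrow> real^'n \<Rightarrow> real^'n \<Rightarrow> real" where
  "KQ C x w P = (\<Sum>a\<in>UNIV. \<Sum>b\<in>UNIV. (\<Sum>c\<in>UNIV. C x a b c * P$c) * w$a * w$b)"
definition TQ :: "('n::finite pt \<Rightarrow> 'n \<Rightarrow> 'n \<Rightarrow> real) \<Rightarrow> 'n pt \<Rightarrow> real^'n \<Rightarrow> real^'n \<Rightarrow> real" where
  "TQ T x w P = (\<Sum>a\<in>UNIV. (\<Sum>b\<in>UNIV. T x a b * P$b) * w$a)"
definition SQ :: "('n::finite pt \<Rightarrow> 'n \<Rightarrow> real) \<Rightarrow> 'n pt \<Rightarrow> real^'n \<Rightarrow> real" where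
  "SQ W x P = (\<Sum>c\<in>UNIV. W x c * P$c)"

lemma sym2_contract:
  fixes T :: "'n::finite \<Rightarrow> 'n \<Rightarrow> real"
  shows "(\<Sum>a\<in>UNIV. \<Sum>b\<in>UNIV. sym2 T a b * w a * w b) = (\<Sum>a\<in>UNIV. \<Sum>b\<in>UNIV. T a b * w a * w b)"
proof -
  have "(\<Sum>a\<in>UNIV. \<Sum>b\<in>UNIV. T b a * w a * w b) = (\<Sum>a\<in>UNIV. \<Sum>b\<in>UNIV. T a b * w a * w b)"
    by (subst sum.swap) (simp add: mult_ac)
  then show ?thesis unfolding sym2_def by (simp add: add_divide_distrib sum.distrib algebra_simps sum_divide_distrib[symmetric])
qed

locale sol =
  fixes U :: "(real^'n::finite) set" and g Q q v t
  assumes metric: "metric_on U g" and Qs: "smooth1 U (\<lambda>x a. Q x $ a)"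
    and xU: "q t \<in> U" and hq: "(q has_vector_derivative v t) (at t)"
    and hv: "(v has_vector_derivative acc g Q (q t) (v t)) (at t)"
begin

lemma Qdiff: "(\<lambda>y. Q y $ a) differentiable (at (q t))"
  using Qs xU unfolding smooth1_def by (auto intro: smooth_diff)

lemma dK:
  assumes K: "killing3 U g C" and Cd: "\<And>a b c. (\<lambda>y. C y a b c) differentiable (at (q t))"
  shows "((\<lambda>s. c3 C (q s) (v s)) has_real_derivative (-3 * KQ C (q t) (v t) (Q (q t)))) (at t)"
proof -
  let ?x = "q t" and ?w = "v t" and ?P = "Q (q t)"
  have s1: "C ?x a b c = C ?x b a c" "C ?x a b c = C ?x a c b" for a b c using K xU unfolding killing3_def by auto
  have z: "(\<Sum>a\<in>UNIV. \<Sum>b\<in>UNIV. \<Sum>c\<in>UNIV. \<Sum>d\<in>UNIV. cd3 g C ?x a b c d * ?w $ a * ?w $ b * ?w $ c * ?w $ d) = 0"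
    using sym4_contract[of "cd3 g C ?x" "\<lambda>a. ?w $ a"] K xU unfolding killing3_def by simp
  let ?R = "\<Sum>a\<in>UNIV. \<Sum>b\<in>UNIV. \<Sum>c\<in>UNIV. C ?x a b c * ?w $ a * ?w $ b * ?P $ c"
  have r1: "(\<Sum>a\<in>UNIV. \<Sum>b\<in>UNIV. \<Sum>c\<in>UNIV. C ?x a b c * (?P $ a * ?w $ b * ?w $ c)) = ?R"
    unfolding sum3_prod
    by (rule sum.reindex_bij_witness[where i="\<lambda>(a,b,c). (c,a,b)" and j="\<lambda>(a,b,c). (b,c,a)"])
       (auto simp: mult_ac s1[of _ _ "_"] intro: trans[OF s1(1) s1(2)])
  have r2: "(\<Sum>a\<in>UNIV. \<Sum>b\<in>UNIV. \<Sum>c\<in>UNIV. C ?x a b c * (?w $ a * ?P $ b * ?w $ c)) = ?R"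
    unfolding sum3_prod
    by (rule sum.reindex_bij_witness[where i="\<lambda>(a,b,c). (a,c,b)" and j="\<lambda>(a,b,c). (a,c,b)"])
       (auto simp: mult_ac intro: s1(2))
  have "KQ C ?x ?w ?P = ?R"
    unfolding KQ_def by (simp add: sum_distrib_right sum_distrib_left mult_ac)
  moreover have "(\<Sum>a\<in>UNIV. \<Sum>b\<in>UNIV. \<Sum>c\<in>UNIV. C ?x a b c *
          (?P $ a * ?w $ b * ?w $ c + ?w $ a * ?P $ b * ?w $ c + ?w $ a * ?w $ b * ?P $ c)) = 3 * ?R"
    using r1 r2 by (simp add: distrib_left sum.distrib mult_ac)
  ultimately show ?thesis
    unfolding c3_def by (rule_tac DERIV_cong[OF D4[where C=C, OF hq hv Cd]]) (simp add: z)
qed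


lemma dT:
  assumes sy: "\<And>a b. T (q t) a b = T (q t) b a" and Td: "\<And>a b. (\<lambda>y. T y a b) differentiable (at (q t))"
  shows "((\<lambda>s. c2 T (q s) (v s)) has_real_derivative
     (c3 (symcd2 g T) (q t) (v t) - 2 * TQ T (q t) (v t) (Q (q t)))) (at t)"
proof -
  let ?x = "q t" and ?w = "v t" and ?P = "Q (q t)"
  have a: "c3 (symcd2 g T) ?x ?w = (\<Sum>a\<in>UNIV. \<Sum>b\<in>UNIV. \<Sum>c\<in>UNIV. cd2 g T ?x a b c * ?w $ a * ?w $ b * ?w $ c)"
    unfolding c3_def symcd2_def by (rule sym3_contract)
  have b1: "(\<Sum>a\<in>UNIV. \<Sum>b\<in>UNIV. T ?x a b * (?P $ a * ?w $ b)) = TQ T ?x ?w ?P"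
    unfolding TQ_def sum_distrib_right
    by (subst sum.swap) (simp add: sy mult_ac)
  have b2: "(\<Sum>a\<in>UNIV. \<Sum>b\<in>UNIV. T ?x a b * (?w $ a * ?P $ b)) = TQ T ?x ?w ?P"
    unfolding TQ_def sum_distrib_right by (simp add: mult_ac)
  have "(\<Sum>a\<in>UNIV. \<Sum>b\<in>UNIV. T ?x a b * (?P $ a * ?w $ b + ?w $ a * ?P $ b)) = 2 * TQ T ?x ?w ?P"
    using b1 b2 by (simp add: distrib_left sum.distrib)
  then show ?thesis unfolding c2_def
    by (rule_tac DERIV_cong[OF D3[where T=T, OF hq hv Td]]) (simp add: a)
qed

lemma dW:
  assumes Wd: "\<And>a. (\<lambda>y. W y a) differentiable (at (q t))"
  shows "((\<lambda>s. c1 W (q s) (v s)) has_real_derivative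
     (c2 (\<lambda>x a b. sym2 (cd1 g W x) a b) (q t) (v t) - SQ W (q t) (Q (q t)))) (at t)"
proof -
  have "c2 (\<lambda>x a b. sym2 (cd1 g W x) a b) (q t) (v t) = (\<Sum>a\<in>UNIV. \<Sum>b\<in>UNIV. cd1 g W (q t) a b * v t $ a * v t $ b)"
    unfolding c2_def by (rule sym2_contract)
  then show ?thesis unfolding c1_def SQ_def
    by (rule_tac DERIV_cong[OF D2[where W=W, OF hq hv Wd]]) simp
qed

lemma dS:
  assumes Wd: "\<And>a. (\<lambda>y. W y a) differentiable (at (q t))"
  shows "((\<lambda>s. SQ W (q s) (Q (q s))) has_real_derivative
     (\<Sum>a\<in>UNIV. pd (\<lambda>y. SQ W y (Q y)) a (q t) * v t $ a)) (at t)"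
proof -
  have "(\<lambda>y. SQ W y (Q y)) differentiable (at (q t))"
    unfolding SQ_def by (intro differentiable_sum ballI differentiable_mult Wd Qdiff) auto
  from chain_pd[OF this hq] show ?thesis .
qed

lemma dG:
  assumes "G differentiable (at (q t))"
  shows "((\<lambda>s. G (q s)) has_real_derivative (\<Sum>a\<in>UNIV. pd G a (q t) * v t $ a)) (at t)"
  using chain_pd[OF assms hq] by (simp add: mult.commute)

end



lemma lin2:
  assumes "\<And>a b. M a b = \<alpha> * (\<Sum>c\<in>UNIV. C x a b c * P$c) - \<beta> * T x a b"
  shows "(\<Sum>a\<in>UNIV. \<Sum>b\<in>UNIV. M a b * w$a * w$b) = \<alpha> * KQ C x w P - \<beta> * c2 T x w"
  unfolding assms KQ_def c2_def
  by (simp add: right_diff_distrib left_diff_distrib sum_subtractf sum_distrib_left sum_distrib_right mult_ac)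

lemma lin1:
  assumes "\<And>a. N a = \<alpha> * (\<Sum>b\<in>UNIV. T x a b * P$b) - \<beta> * W x a"
  shows "(\<Sum>a\<in>UNIV. N a * w$a) = \<alpha> * TQ T x w P - \<beta> * c1 W x w"
  unfolding assms TQ_def c1_def
  by (simp add: right_diff_distrib left_diff_distrib sum_subtractf sum_distrib_left sum_distrib_right mult_ac)

lemma smooth2_diff: "smooth2 U T \<Longrightarrow> x \<in> U \<Longrightarrow> (\<lambda>y. T y a b) differentiable (at x)"
  unfolding smooth2_def by (auto intro: smooth_diff)
lemma smooth1_diff: "smooth1 U T \<Longrightarrow> x \<in> U \<Longrightarrow> (\<lambda>y. T y a) differentiable (at x)"
  unfolding smooth1_def by (auto intro: smooth_diff)
lemma smooth3_diff: "smooth3 U T \<Longrightarrow> x \<in> U \<Longrightarrow> (\<lambda>y. T y a b c) differentiable (at x)"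
  unfolding smooth3_def by (auto intro: smooth_diff)

lemma solI:
  assumes "metric_on U g" "smooth1 U (\<lambda>x a. Q x $ a)" "is_solution U g Q I q v" "t \<in> I"
  shows "sol U g Q q v t"
  using assms unfolding is_solution_def sol_def acc_def by auto

lemma cfi3:
  fixes U :: "(real^'n::finite) set"
    and g :: "real^'n \<Rightarrow> real^'n^'n"
    and Q :: "real^'n \<Rightarrow> real^'n"
  assumes metric: "metric_on U g"
    and Qsmooth: "smooth1 U (\<lambda>x a. Q x $ a)"
  shows
   "(\<forall>(lam::real) (L2 :: real^'n \<Rightarrow> 'n \<Rightarrow> 'n \<Rightarrow> real) (L1 :: real^'n \<Rightarrow> 'n \<Rightarrow> real).
      lam \<noteq> 0
      \<and> smooth2 U L2 \<and> (\<forall>x\<in>U. \<forall>a b. L2 x a b = L2 x b a)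
      \<and> killing3 U g (symcd2 g L2)
      \<and> smooth1 U L1
      \<and> (\<forall>x\<in>U. \<forall>a b. sym2 (cd1 g L1 x) a b
            = - (3 / lam) * (\<Sum>c\<in>UNIV. symcd2 g L2 x a b c * Q x $ c) - lam * L2 x a b)
      \<and> (\<forall>x\<in>U. \<forall>a. pd (\<lambda>y. \<Sum>c\<in>UNIV. L1 y c * Q y $ c) a x
            = 2 * lam * (\<Sum>b\<in>UNIV. L2 x a b * Q x $ b) - lam^2 * L1 x a)
      \<longrightarrow> first_integral U g Q (\<lambda>t x v. exp (lam * t) *
            (- (\<Sum>a\<in>UNIV. \<Sum>b\<in>UNIV. \<Sum>c\<in>UNIV. symcd2 g L2 x a b c * v$a * v$b * v$c)
             + lam * (\<Sum>a\<in>UNIV. \<Sum>b\<in>UNIV. L2 x a b * v$a * v$b)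
             + lam * (\<Sum>a\<in>UNIV. L1 x a * v$a)
             + (\<Sum>a\<in>UNIV. L1 x a * Q x $ a))))"
proof (intro allI impI)
  fix lam :: real and L2 :: "real^'n \<Rightarrow> 'n \<Rightarrow> 'n \<Rightarrow> real" and L1 :: "real^'n \<Rightarrow> 'n \<Rightarrow> real"
  assume H: "lam \<noteq> 0
      \<and> smooth2 U L2 \<and> (\<forall>x\<in>U. \<forall>a b. L2 x a b = L2 x b a)
      \<and> killing3 U g (symcd2 g L2)
      \<and> smooth1 U L1
      \<and> (\<forall>x\<in>U. \<forall>a b. sym2 (cd1 g L1 x) a b
            = - (3 / lam) * (\<Sum>c\<in>UNIV. symcd2 g L2 x a b c * Q x $ c) - lam * L2 x a b)
      \<and> (\<forall>x\<in>U. \<forall>a. pd (\<lambda>y. \<Sum>c\<in>UNIV. L1 y c * Q y $ c) a x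
            = 2 * lam * (\<Sum>b\<in>UNIV. L2 x a b * Q x $ b) - lam^2 * L1 x a)"
  show "first_integral U g Q (\<lambda>t x v. exp (lam * t) *
            (- (\<Sum>a\<in>UNIV. \<Sum>b\<in>UNIV. \<Sum>c\<in>UNIV. symcd2 g L2 x a b c * v$a * v$b * v$c)
             + lam * (\<Sum>a\<in>UNIV. \<Sum>b\<in>UNIV. L2 x a b * v$a * v$b)
             + lam * (\<Sum>a\<in>UNIV. L1 x a * v$a)
             + (\<Sum>a\<in>UNIV. L1 x a * Q x $ a)))"
    unfolding first_integral_def
  proof (intro allI impI ballI)
    fix I q v t assume sI: "is_solution U g Q I q v" and tI: "t \<in> I"
    have S: "sol U g Q q v t" by (rule solI[OF metric Qsmooth sI tI])
    note xU = sol.xU[OF S]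
    let ?x = "q t" and ?w = "v t" and ?P = "Q (q t)"
    let ?K = "symcd2 g L2"
    have lam: "lam \<noteq> 0" using H by blast
    have K: "killing3 U g ?K" using H by blast
    have Kd: "\<And>a b c. (\<lambda>y. ?K y a b c) differentiable (at ?x)"
      using H by (intro symcd2_diff[OF metric xU]) blast
    have Ld: "\<And>a b. (\<lambda>y. L2 y a b) differentiable (at ?x)" using H xU by (blast intro: smooth2_diff)
    have Lsym: "\<And>a b. L2 ?x a b = L2 ?x b a" using H xU by blast
    have Wd: "\<And>a. (\<lambda>y. L1 y a) differentiable (at ?x)" using H xU by (blast intro: smooth1_diff)
    have hW: "c2 (\<lambda>x a b. sym2 (cd1 g L1 x) a b) ?x ?w = - (3 / lam) * KQ ?K ?x ?w ?P - lam * c2 L2 ?x ?w"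
      unfolding c2_def[of "\<lambda>x a b. sym2 (cd1 g L1 x) a b"] by (rule lin2) (use H xU in blast)
    have hS: "(\<Sum>a\<in>UNIV. pd (\<lambda>y. SQ L1 y (Q y)) a ?x * ?w $ a) = 2 * lam * TQ L2 ?x ?w ?P - lam^2 * c1 L1 ?x ?w"
      unfolding SQ_def by (rule lin1) (use H xU in \<open>simp add: mult.assoc\<close>)
    have e: "((\<lambda>s. exp (lam * s)) has_real_derivative lam * exp (lam * t)) (at t)"
      by (auto intro!: derivative_eq_intros)
    have X: "((\<lambda>s. - c3 ?K (q s) (v s) + lam * c2 L2 (q s) (v s) + lam * c1 L1 (q s) (v s) + SQ L1 (q s) (Q (q s)))
       has_real_derivative
        (- (-3 * KQ ?K ?x ?w ?P) + lam * (c3 ?K ?x ?w - 2 * TQ L2 ?x ?w ?P)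
         + lam * (c2 (\<lambda>x a b. sym2 (cd1 g L1 x) a b) ?x ?w - SQ L1 ?x ?P)
         + (\<Sum>a\<in>UNIV. pd (\<lambda>y. SQ L1 y (Q y)) a ?x * ?w $ a))) (at t)"
      by (intro DERIV_add DERIV_minus DERIV_cmult sol.dK[OF S, OF K Kd] sol.dT[OF S, OF Lsym Ld] sol.dW[OF S, OF Wd] sol.dS[OF S, OF Wd])
    have "((\<lambda>s. exp (lam * s) * (- c3 ?K (q s) (v s) + lam * c2 L2 (q s) (v s) + lam * c1 L1 (q s) (v s) + SQ L1 (q s) (Q (q s))))
       has_real_derivative 0) (at t)"
      apply (rule DERIV_cong[OF DERIV_mult[OF e X]])
      unfolding hW hS using lam by (simp add: field_simps power2_eq_square)
    then show "((\<lambda>s. exp (lam * s) *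
            (- (\<Sum>a\<in>UNIV. \<Sum>b\<in>UNIV. \<Sum>c\<in>UNIV. symcd2 g L2 (q s) a b c * v s $a * v s $b * v s $c)
             + lam * (\<Sum>a\<in>UNIV. \<Sum>b\<in>UNIV. L2 (q s) a b * v s $a * v s $b)
             + lam * (\<Sum>a\<in>UNIV. L1 (q s) a * v s $a)
             + (\<Sum>a\<in>UNIV. L1 (q s) a * Q (q s) $ a))) has_real_derivative 0) (at t)"
      unfolding c1_def c2_def c3_def SQ_def .
  qed
qed



lemma sum_1_l: "(\<Sum>j\<in>{1..l}. f j) = (\<Sum>j<l. f (Suc j))" for f :: "nat \<Rightarrow> real"
  using sum.atLeast1_atMost_eq[of f l] by simp

lemma sum_atMost_split: "(\<Sum>j\<le>l. f j) = (\<Sum>j<l. f j) + f l" for f :: "nat \<Rightarrow> real"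
  by (simp add: lessThan_Suc_atMost[symmetric])

lemma alg1:
  fixes A E B F H Sv Wc Pd :: "nat \<Rightarrow> real" and t GD :: real and l :: nat
  assumes l: "l \<ge> 1"
    and hA: "A (2*l) = 0"
    and hW: "\<And>j. j < l \<Longrightarrow> Wc (2*j+1) = - (3 / real (2*j+1)) * E (2*j) - real (2*j+2) * B (2*j+2)"
    and hPl: "Pd (2*l-1) = 4 * real l * F (2*l)"
    and hPk: "\<And>j. Suc j < l \<Longrightarrow> Pd (2*j+1) = 2 * real (2*j+2) * F (2*j+2) - real (2*j+3) * real (2*j+2) * H (2*j+3)"
    and hG: "GD = 2 * F 0 - H 1"
  shows "- (\<Sum>j<l. real (2*j+1) * t^(2*j+1-1) / real (2*j+1) * A (2*j) + t^(2*j+1) / real (2*j+1) * (-3 * E (2*j)))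
   + (\<Sum>j\<le>l. real (2*j) * t^(2*j-1) * B (2*j) + t^(2*j) * (A (2*j) - 2 * F (2*j)))
   + (\<Sum>j\<in>{1..l}. real (2*j-1) * t^(2*j-1-1) * H (2*j-1) + t^(2*j-1) * (Wc (2*j-1) - Sv (2*j-1)))
   + (\<Sum>j\<in>{1..l}. real (2*j) * t^(2*j-1) / real (2*j) * Sv (2*j-1) + t^(2*j) / real (2*j) * Pd (2*j-1))
   + GD = 0"
proof -
  define \<beta> where "\<beta> j = real (2*j) * t^(2*j-1) * B (2*j)" for j
  define \<phi> where "\<phi> j = 2 * t^(2*j) * F (2*j)" for j
  define \<eta> where "\<eta> j = (if j < l then real (2*j+1) * t^(2*j) * H (2*j+1) else 0)" for j
  let ?r1 = "\<lambda>j. real (2*j+1) * t^(2*j+1-1) / real (2*j+1) * A (2*j) + t^(2*j+1) / real (2*j+1) * (-3 * E (2*j))"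
  let ?r2 = "\<lambda>j. real (2*j) * t^(2*j-1) * B (2*j) + t^(2*j) * (A (2*j) - 2 * F (2*j))"
  let ?r3 = "\<lambda>j. real (2*j-1) * t^(2*j-1-1) * H (2*j-1) + t^(2*j-1) * (Wc (2*j-1) - Sv (2*j-1))"
  let ?r4 = "\<lambda>j. real (2*j) * t^(2*j-1) / real (2*j) * Sv (2*j-1) + t^(2*j) / real (2*j) * Pd (2*j-1)"
  have tot: "- (\<Sum>j<l. ?r1 j) + (\<Sum>j\<le>l. ?r2 j) + (\<Sum>j\<in>{1..l}. ?r3 j) + (\<Sum>j\<in>{1..l}. ?r4 j) + GD
      = (\<Sum>j<l. - ?r1 j + ?r2 j + ?r3 (Suc j) + ?r4 (Suc j)) + ?r2 l + GD"
    unfolding sum_1_l sum_atMost_split sum.distrib sum_negf by linarith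
  have pt: "- ?r1 j + ?r2 j + ?r3 (Suc j) + ?r4 (Suc j) = (\<beta> j - \<beta> (Suc j)) + (\<phi> (Suc j) - \<phi> j) + (\<eta> j - \<eta> (Suc j))"
    if j: "j < l" for j
  proof -
    have w: "Wc (2 * Suc j - 1) = - (3 / real (2*j+1)) * E (2*j) - real (2*j+2) * B (2*j+2)"
      using hW[OF j] by simp
    have p: "t^(2 * Suc j) / real (2 * Suc j) * Pd (2 * Suc j - 1) = \<phi> (Suc j) - \<eta> (Suc j)"
    proof (cases "Suc j = l")
      case True
      then have "Pd (2 * Suc j - 1) = 4 * real (Suc j) * F (2 * Suc j)" using hPl by simp
      then show ?thesis using True by (simp add: \<phi>_def \<eta>_def field_simps)
    next
      case False
      then have "Suc j < l" using j by simp
      have e: "2 * Suc j - 1 = 2*j+1" by simp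
      show ?thesis unfolding e hPk[OF \<open>Suc j < l\<close>] using \<open>Suc j < l\<close>
        by (simp add: \<phi>_def \<eta>_def field_simps eval_nat_numeral)
    qed
    have ej: "\<eta> j = real (2*j+1) * t^(2*j) * H (2*j+1)" using j by (simp add: \<eta>_def)
    have f1: "real (2*j+1) * t^(2*j+1-1) / real (2*j+1) = t^(2*j)" by simp
    have f2: "real (2 * Suc j) * t ^ (2 * Suc j - 1) / real (2 * Suc j) = t^(2*j+1)" by simp
    have f3: "real (2*Suc j - 1) * t^(2*Suc j - 1 - 1) = real (2*j+1) * t^(2*j)" by simp
    have f5: "2*Suc j - 1 = 2*j+1" by simp
    have bs: "\<beta> (Suc j) = real (2*j+2) * t^(2*j+1) * B (2*j+2)" by (simp add: \<beta>_def)
    have ps: "\<phi> (Suc j) = 2 * t^(2*j+2) * F (2*j+2)" by (simp add: \<phi>_def)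
    have e3: "t^(2*j+1) / real (2*j+1) * (-3 * E (2*j)) = t^(2*j+1) * (- (3 / real (2*j+1)) * E (2*j))" by simp
    show ?thesis
      apply (simp only: p ej f1 f2 f3 w bs ps e3)
      apply (simp add: \<beta>_def \<phi>_def algebra_simps)
      done
  qed
  have "(\<Sum>j<l. - ?r1 j + ?r2 j + ?r3 (Suc j) + ?r4 (Suc j))
      = (\<Sum>j<l. (\<beta> j - \<beta> (Suc j)) + (\<phi> (Suc j) - \<phi> j) + (\<eta> j - \<eta> (Suc j)))"
    by (rule sum.cong[OF refl], rule pt) simp
  also have "\<dots> = (\<beta> 0 - \<beta> l) + (\<phi> l - \<phi> 0) + (\<eta> 0 - \<eta> l)"
    by (simp add: sum.distrib sum_lessThan_telescope sum_lessThan_telescope')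
  finally have s: "(\<Sum>j<l. - ?r1 j + ?r2 j + ?r3 (Suc j) + ?r4 (Suc j)) = (\<beta> 0 - \<beta> l) + (\<phi> l - \<phi> 0) + (\<eta> 0 - \<eta> l)" .
  have "?r2 l = \<beta> l - \<phi> l" using hA unfolding \<beta>_def \<phi>_def by (simp add: algebra_simps)
  moreover have "GD = \<phi> 0 - \<eta> 0" using hG l unfolding \<phi>_def \<eta>_def by simp
  moreover have "\<beta> 0 = 0" "\<eta> l = 0" unfolding \<beta>_def \<eta>_def by simp_all
  ultimately show ?thesis using tot s by simp
qed


lemma alg2:
  fixes A E B F H Sv Wc Pd :: "nat \<Rightarrow> real" and t Ec :: real and l :: nat
  assumes hA: "A (2*l+1) = 0"
    and hW0: "Wc 0 = 3 * Ec - B 1"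
    and hW: "\<And>j. 1 \<le> j \<Longrightarrow> j \<le> l \<Longrightarrow> Wc (2*j) = - (3 / real (2*j)) * E (2*j-1) - real (2*j+1) * B (2*j+1)"
    and hPl: "Pd (2*l) = 2 * real (2*l+1) * F (2*l+1)"
    and hPk: "\<And>j. j < l \<Longrightarrow> Pd (2*j) = 2 * real (2*j+1) * F (2*j+1) - real (2*j+2) * real (2*j+1) * H (2*j+2)"
  shows "(-3 * Ec) - (\<Sum>j\<in>{1..l}. real (2*j) * t^(2*j-1) / real (2*j) * A (2*j-1) + t^(2*j) / real (2*j) * (-3 * E (2*j-1)))
   + (\<Sum>j\<le>l. real (2*j+1) * t^(2*j+1-1) * B (2*j+1) + t^(2*j+1) * (A (2*j+1) - 2 * F (2*j+1)))
   + (\<Sum>j\<le>l. real (2*j) * t^(2*j-1) * H (2*j) + t^(2*j) * (Wc (2*j) - Sv (2*j)))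
   + (\<Sum>j\<le>l. real (2*j+1) * t^(2*j+1-1) / real (2*j+1) * Sv (2*j) + t^(2*j+1) / real (2*j+1) * Pd (2*j))
   = 0"
proof -
  define \<epsilon> where "\<epsilon> j = (if j = 0 then -3 * Ec else 3 * t^(2*j) / real (2*j) * E (2*j-1))" for j
  define \<eta> where "\<eta> j = real (2*j) * t^(2*j-1) * H (2*j)" for j
  let ?r1 = "\<lambda>j. real (2*j) * t^(2*j-1) / real (2*j) * A (2*j-1) + t^(2*j) / real (2*j) * (-3 * E (2*j-1))"
  let ?r2 = "\<lambda>j. real (2*j+1) * t^(2*j+1-1) * B (2*j+1) + t^(2*j+1) * (A (2*j+1) - 2 * F (2*j+1))"
  let ?r3 = "\<lambda>j. real (2*j) * t^(2*j-1) * H (2*j) + t^(2*j) * (Wc (2*j) - Sv (2*j))"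
  let ?r4 = "\<lambda>j. real (2*j+1) * t^(2*j+1-1) / real (2*j+1) * Sv (2*j) + t^(2*j+1) / real (2*j+1) * Pd (2*j)"
  have tot: "(-3 * Ec) - (\<Sum>j\<in>{1..l}. ?r1 j) + (\<Sum>j\<le>l. ?r2 j) + (\<Sum>j\<le>l. ?r3 j) + (\<Sum>j\<le>l. ?r4 j)
      = (\<Sum>j<l. - ?r1 (Suc j) + ?r2 j + ?r3 j + ?r4 j) + (?r2 l + ?r3 l + ?r4 l) + (-3 * Ec)"
    unfolding sum_1_l sum_atMost_split sum.distrib sum_negf by linarith
  have wj: "t^(2*j) * Wc (2*j) = - \<epsilon> j - real (2*j+1) * t^(2*j) * B (2*j+1)" if "j \<le> l" for j
  proof (cases "j = 0")
    case True then show ?thesis using hW0 by (simp add: \<epsilon>_def)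
  next
    case False
    then have "1 \<le> j" by simp
    show ?thesis unfolding hW[OF \<open>1 \<le> j\<close> that] \<epsilon>_def using False by (simp add: algebra_simps)
  qed
  have pt: "- ?r1 (Suc j) + ?r2 j + ?r3 j + ?r4 j = (\<epsilon> (Suc j) - \<epsilon> j) + (\<eta> j - \<eta> (Suc j))"
    if j: "j < l" for j
  proof -
    have f1: "real (2 * Suc j) * t ^ (2 * Suc j - 1) / real (2 * Suc j) = t^(2*j+1)" by simp
    have f2: "real (2*j+1) * t^(2*j+1-1) / real (2*j+1) = t^(2*j)" by simp
    have f3: "2 * Suc j - 1 = 2*j+1" by simp
    have es: "t ^ (2 * Suc j) / real (2 * Suc j) * (-3 * E (2 * Suc j - 1)) = - \<epsilon> (Suc j)"
      unfolding \<epsilon>_def by simp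
    have hs: "\<eta> (Suc j) = real (2*j+2) * t^(2*j+1) * H (2*j+2)" by (simp add: \<eta>_def)
    have p: "t^(2*j+1) / real (2*j+1) * Pd (2*j) = 2 * t^(2*j+1) * F (2*j+1) - real (2*j+2) * t^(2*j+1) * H (2*j+2)"
      unfolding hPk[OF j] by (simp add: field_simps)
    have w: "t^(2*j) * (Wc (2*j) - Sv (2*j)) = - \<epsilon> j - real (2*j+1) * t^(2*j) * B (2*j+1) - t^(2*j) * Sv (2*j)"
      using wj[of j] j by (simp add: algebra_simps)
    show ?thesis
      apply (simp only: f1 f2 es p w hs)
      apply (simp add: \<eta>_def f3 algebra_simps)
      done
  qed
  have last: "?r2 l + ?r3 l + ?r4 l = - \<epsilon> l + \<eta> l"
  proof -
    have f2: "real (2*l+1) * t^(2*l+1-1) / real (2*l+1) = t^(2*l)" by simp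
    have p: "t^(2*l+1) / real (2*l+1) * Pd (2*l) = 2 * t^(2*l+1) * F (2*l+1)"
      unfolding hPl by (simp add: field_simps)
    have w: "t^(2*l) * (Wc (2*l) - Sv (2*l)) = - \<epsilon> l - real (2*l+1) * t^(2*l) * B (2*l+1) - t^(2*l) * Sv (2*l)"
      using wj[of l] by (simp add: algebra_simps)
    show ?thesis
      apply (simp only: f2 p w hA)
      apply (simp add: \<eta>_def algebra_simps)
      done
  qed
  have "(\<Sum>j<l. - ?r1 (Suc j) + ?r2 j + ?r3 j + ?r4 j) = (\<Sum>j<l. (\<epsilon> (Suc j) - \<epsilon> j) + (\<eta> j - \<eta> (Suc j)))"
    by (rule sum.cong[OF refl], rule pt) simp
  also have "\<dots> = (\<epsilon> l - \<epsilon> 0) + (\<eta> 0 - \<eta> l)"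
    by (simp add: sum.distrib sum_lessThan_telescope sum_lessThan_telescope')
  finally have s: "(\<Sum>j<l. - ?r1 (Suc j) + ?r2 j + ?r3 j + ?r4 j) = (\<epsilon> l - \<epsilon> 0) + (\<eta> 0 - \<eta> l)" .
  have "\<epsilon> 0 = -3 * Ec" "\<eta> 0 = 0" unfolding \<epsilon>_def \<eta>_def by simp_all
  then show ?thesis using tot s last by simp
qed


lemma DERIV_pc:
  assumes "(f has_real_derivative D) (at t)"
  shows "((\<lambda>s. s^n / c * f s) has_real_derivative (real n * t^(n-1) / c * f t + t^n / c * D)) (at t)"
  by (rule DERIV_cong[OF DERIV_mult[OF DERIV_cdivide[OF DERIV_pow] assms]]) simp

lemma DERIV_p:
  assumes "(f has_real_derivative D) (at t)"
  shows "((\<lambda>s. s^n * f s) has_real_derivative (real n * t^(n-1) * f t + t^n * D)) (at t)"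
  by (rule DERIV_cong[OF DERIV_mult[OF DERIV_pow assms]]) simp

lemma killing2_c3:
  assumes "killing2 U g C" "x \<in> U"
  shows "c3 (symcd2 g C) x w = 0"
  using assms unfolding killing2_def c3_def symcd2_def by simp


lemma cfi1:
  fixes U :: "(real^'n::finite) set"
    and g :: "real^'n \<Rightarrow> real^'n^'n"
    and Q :: "real^'n \<Rightarrow> real^'n"
  assumes metric: "metric_on U g"
    and Qsmooth: "smooth1 U (\<lambda>x a. Q x $ a)"
  shows
   "(\<forall>(l::nat) (L2 :: nat \<Rightarrow> real^'n \<Rightarrow> 'n \<Rightarrow> 'n \<Rightarrow> real) (L1 :: nat \<Rightarrow> real^'n \<Rightarrow> 'n \<Rightarrow> real)
       (G :: real^'n \<Rightarrow> real).
      l \<ge> 1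
      \<and> (\<forall>N. even N \<and> N \<le> 2*l \<longrightarrow> smooth2 U (L2 N) \<and> (\<forall>x\<in>U. \<forall>a b. L2 N x a b = L2 N x b a))
      \<and> (\<forall>N. even N \<and> N \<le> 2*l - 2 \<longrightarrow> killing3 U g (symcd2 g (L2 N)))
      \<and> killing2 U g (L2 (2*l))
      \<and> (\<forall>A. odd A \<and> A \<le> 2*l - 1 \<longrightarrow> smooth1 U (L1 A))
      \<and> smooth_on_chart U G
      \<and> (\<forall>k. even k \<and> 2 \<le> k \<and> k \<le> 2*l \<longrightarrow> (\<forall>x\<in>U. \<forall>a b.
            sym2 (cd1 g (L1 (k-1)) x) a b
              = - (3 / real (k-1)) * (\<Sum>c\<in>UNIV. symcd2 g (L2 (k-2)) x a b c * Q x $ c)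
                - real k * L2 k x a b))
      \<and> (\<forall>x\<in>U. \<forall>a. pd (\<lambda>y. \<Sum>c\<in>UNIV. L1 (2*l-1) y c * Q y $ c) a x
            = 4 * real l * (\<Sum>b\<in>UNIV. L2 (2*l) x a b * Q x $ b))
      \<and> (\<forall>k. odd k \<and> 3 \<le> k \<and> k \<le> 2*l - 1 \<longrightarrow> (\<forall>x\<in>U. \<forall>a.
            pd (\<lambda>y. \<Sum>c\<in>UNIV. L1 (k-2) y c * Q y $ c) a x
              = 2 * real (k-1) * (\<Sum>b\<in>UNIV. L2 (k-1) x a b * Q x $ b)
                - real k * real (k-1) * L1 k x a))
      \<and> (\<forall>x\<in>U. \<forall>a. pd G a x = 2 * (\<Sum>b\<in>UNIV. L2 0 x a b * Q x $ b) - L1 1 x a)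
      \<longrightarrow> first_integral U g Q (\<lambda>t x v.
            - (\<Sum>j<l. t^(2*j+1) / real (2*j+1) *
                 (\<Sum>a\<in>UNIV. \<Sum>b\<in>UNIV. \<Sum>c\<in>UNIV. symcd2 g (L2 (2*j)) x a b c * v$a * v$b * v$c))
            + (\<Sum>j\<le>l. t^(2*j) * (\<Sum>a\<in>UNIV. \<Sum>b\<in>UNIV. L2 (2*j) x a b * v$a * v$b))
            + (\<Sum>j\<in>{1..l}. t^(2*j-1) * (\<Sum>a\<in>UNIV. L1 (2*j-1) x a * v$a))
            + (\<Sum>j\<in>{1..l}. t^(2*j) / real (2*j) * (\<Sum>c\<in>UNIV. L1 (2*j-1) x c * Q x $ c))
            + G x))"
proof (intro allI impI)
  fix l :: nat and L2 :: "nat \<Rightarrow> real^'n \<Rightarrow> 'n \<Rightarrow> 'n \<Rightarrow> real" and L1 :: "nat \<Rightarrow> real^'n \<Rightarrow> 'n \<Rightarrow> real"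
    and G :: "real^'n \<Rightarrow> real"
  assume H: "l \<ge> 1
      \<and> (\<forall>N. even N \<and> N \<le> 2*l \<longrightarrow> smooth2 U (L2 N) \<and> (\<forall>x\<in>U. \<forall>a b. L2 N x a b = L2 N x b a))
      \<and> (\<forall>N. even N \<and> N \<le> 2*l - 2 \<longrightarrow> killing3 U g (symcd2 g (L2 N)))
      \<and> killing2 U g (L2 (2*l))
      \<and> (\<forall>A. odd A \<and> A \<le> 2*l - 1 \<longrightarrow> smooth1 U (L1 A))
      \<and> smooth_on_chart U G
      \<and> (\<forall>k. even k \<and> 2 \<le> k \<and> k \<le> 2*l \<longrightarrow> (\<forall>x\<in>U. \<forall>a b.
            sym2 (cd1 g (L1 (k-1)) x) a b
              = - (3 / real (k-1)) * (\<Sum>c\<in>UNIV. symcd2 g (L2 (k-2)) x a b c * Q x $ c)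
                - real k * L2 k x a b))
      \<and> (\<forall>x\<in>U. \<forall>a. pd (\<lambda>y. \<Sum>c\<in>UNIV. L1 (2*l-1) y c * Q y $ c) a x
            = 4 * real l * (\<Sum>b\<in>UNIV. L2 (2*l) x a b * Q x $ b))
      \<and> (\<forall>k. odd k \<and> 3 \<le> k \<and> k \<le> 2*l - 1 \<longrightarrow> (\<forall>x\<in>U. \<forall>a.
            pd (\<lambda>y. \<Sum>c\<in>UNIV. L1 (k-2) y c * Q y $ c) a x
              = 2 * real (k-1) * (\<Sum>b\<in>UNIV. L2 (k-1) x a b * Q x $ b)
                - real k * real (k-1) * L1 k x a))
      \<and> (\<forall>x\<in>U. \<forall>a. pd G a x = 2 * (\<Sum>b\<in>UNIV. L2 0 x a b * Q x $ b) - L1 1 x a)"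
  note l = H[THEN conjunct1]
  note HL2 = H[THEN conjunct2, THEN conjunct1, rule_format]
  note HK = H[THEN conjunct2, THEN conjunct2, THEN conjunct1, rule_format]
  note HK2 = H[THEN conjunct2, THEN conjunct2, THEN conjunct2, THEN conjunct1]
  note HL1 = H[THEN conjunct2, THEN conjunct2, THEN conjunct2, THEN conjunct2, THEN conjunct1, rule_format]
  note HG = H[THEN conjunct2, THEN conjunct2, THEN conjunct2, THEN conjunct2, THEN conjunct2, THEN conjunct1]
  note HW = H[THEN conjunct2, THEN conjunct2, THEN conjunct2, THEN conjunct2, THEN conjunct2, THEN conjunct2, THEN conjunct1, rule_format]
  note HPl = H[THEN conjunct2, THEN conjunct2, THEN conjunct2, THEN conjunct2, THEN conjunct2, THEN conjunct2, THEN conjunct2, THEN conjunct1, rule_format]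
  note HPk = H[THEN conjunct2, THEN conjunct2, THEN conjunct2, THEN conjunct2, THEN conjunct2, THEN conjunct2, THEN conjunct2, THEN conjunct2, THEN conjunct1, rule_format]
  note HGd = H[THEN conjunct2, THEN conjunct2, THEN conjunct2, THEN conjunct2, THEN conjunct2, THEN conjunct2, THEN conjunct2, THEN conjunct2, THEN conjunct2, rule_format]
  show "first_integral U g Q (\<lambda>t x v.
            - (\<Sum>j<l. t^(2*j+1) / real (2*j+1) *
                 (\<Sum>a\<in>UNIV. \<Sum>b\<in>UNIV. \<Sum>c\<in>UNIV. symcd2 g (L2 (2*j)) x a b c * v$a * v$b * v$c))
            + (\<Sum>j\<le>l. t^(2*j) * (\<Sum>a\<in>UNIV. \<Sum>b\<in>UNIV. L2 (2*j) x a b * v$a * v$b))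
            + (\<Sum>j\<in>{1..l}. t^(2*j-1) * (\<Sum>a\<in>UNIV. L1 (2*j-1) x a * v$a))
            + (\<Sum>j\<in>{1..l}. t^(2*j) / real (2*j) * (\<Sum>c\<in>UNIV. L1 (2*j-1) x c * Q x $ c))
            + G x)"
    unfolding first_integral_def
  proof (intro allI impI ballI)
    fix I q v t assume sI: "is_solution U g Q I q v" and tI: "t \<in> I"
    have S: "sol U g Q q v t" by (rule solI[OF metric Qsmooth sI tI])
    note xU = sol.xU[OF S]
    let ?x = "q t" and ?w = "v t" and ?P = "Q (q t)"
    let ?K = "\<lambda>N. symcd2 g (L2 N)"
    have d1: "((\<lambda>s. \<Sum>j<l. s^(2*j+1) / real (2*j+1) * c3 (?K (2*j)) (q s) (v s)) has_real_derivative
       (\<Sum>j<l. real (2*j+1) * t^(2*j+1-1) / real (2*j+1) * c3 (?K (2*j)) ?x ?w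
            + t^(2*j+1) / real (2*j+1) * (-3 * KQ (?K (2*j)) ?x ?w ?P))) (at t)"
    proof (rule DERIV_sum, rule DERIV_pc, rule sol.dK[OF S])
      fix j assume "j \<in> {..<l}"
      then have j: "j < l" by simp
      show "killing3 U g (?K (2*j))" using j by (intro HK) auto
      fix a b c
      show "(\<lambda>y. ?K (2*j) y a b c) differentiable (at ?x)"
        using HL2[of "2*j"] j by (intro symcd2_diff[OF metric xU]) auto
    qed
    have d2: "((\<lambda>s. \<Sum>j\<le>l. s^(2*j) * c2 (L2 (2*j)) (q s) (v s)) has_real_derivative
       (\<Sum>j\<le>l. real (2*j) * t^(2*j-1) * c2 (L2 (2*j)) ?x ?w
            + t^(2*j) * (c3 (?K (2*j)) ?x ?w - 2 * TQ (L2 (2*j)) ?x ?w ?P))) (at t)"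
    proof (rule DERIV_sum, rule DERIV_p, rule sol.dT[OF S])
      fix j assume "j \<in> {..l}"
      then have j: "j \<le> l" by simp
      fix a b
      show "L2 (2*j) ?x a b = L2 (2*j) ?x b a" using HL2[of "2*j"] j xU by auto
      show "(\<lambda>y. L2 (2*j) y a b) differentiable (at ?x)"
        using HL2[of "2*j"] j xU by (auto intro: smooth2_diff)
    qed
    have d3: "((\<lambda>s. \<Sum>j\<in>{1..l}. s^(2*j-1) * c1 (L1 (2*j-1)) (q s) (v s)) has_real_derivative
       (\<Sum>j\<in>{1..l}. real (2*j-1) * t^(2*j-1-1) * c1 (L1 (2*j-1)) ?x ?w
            + t^(2*j-1) * (c2 (\<lambda>x a b. sym2 (cd1 g (L1 (2*j-1)) x) a b) ?x ?w - SQ (L1 (2*j-1)) ?x ?P))) (at t)"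
    proof (rule DERIV_sum, rule DERIV_p, rule sol.dW[OF S])
      fix j a assume "j \<in> {1..l}"
      then have "smooth1 U (L1 (2*j-1))" by (intro HL1) auto
      then show "(\<lambda>y. L1 (2*j-1) y a) differentiable (at ?x)" by (rule smooth1_diff[OF _ xU])
    qed
    have d4: "((\<lambda>s. \<Sum>j\<in>{1..l}. s^(2*j) / real (2*j) * SQ (L1 (2*j-1)) (q s) (Q (q s))) has_real_derivative
       (\<Sum>j\<in>{1..l}. real (2*j) * t^(2*j-1) / real (2*j) * SQ (L1 (2*j-1)) ?x ?P
            + t^(2*j) / real (2*j) * (\<Sum>a\<in>UNIV. pd (\<lambda>y. SQ (L1 (2*j-1)) y (Q y)) a ?x * ?w $ a))) (at t)"
    proof (rule DERIV_sum, rule DERIV_pc, rule sol.dS[OF S])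
      fix j a assume "j \<in> {1..l}"
      then have "smooth1 U (L1 (2*j-1))" by (intro HL1) auto
      then show "(\<lambda>y. L1 (2*j-1) y a) differentiable (at ?x)" by (rule smooth1_diff[OF _ xU])
    qed
    have d5: "((\<lambda>s. G (q s)) has_real_derivative (\<Sum>a\<in>UNIV. pd G a ?x * ?w $ a)) (at t)"
      by (rule sol.dG[OF S]) (rule smooth_diff[OF HG xU])
    have alg: "- (\<Sum>j<l. real (2*j+1) * t^(2*j+1-1) / real (2*j+1) * c3 (?K (2*j)) ?x ?w
            + t^(2*j+1) / real (2*j+1) * (-3 * KQ (?K (2*j)) ?x ?w ?P))
     + (\<Sum>j\<le>l. real (2*j) * t^(2*j-1) * c2 (L2 (2*j)) ?x ?w
            + t^(2*j) * (c3 (?K (2*j)) ?x ?w - 2 * TQ (L2 (2*j)) ?x ?w ?P))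
     + (\<Sum>j\<in>{1..l}. real (2*j-1) * t^(2*j-1-1) * c1 (L1 (2*j-1)) ?x ?w
            + t^(2*j-1) * (c2 (\<lambda>x a b. sym2 (cd1 g (L1 (2*j-1)) x) a b) ?x ?w - SQ (L1 (2*j-1)) ?x ?P))
     + (\<Sum>j\<in>{1..l}. real (2*j) * t^(2*j-1) / real (2*j) * SQ (L1 (2*j-1)) ?x ?P
            + t^(2*j) / real (2*j) * (\<Sum>a\<in>UNIV. pd (\<lambda>y. SQ (L1 (2*j-1)) y (Q y)) a ?x * ?w $ a))
     + (\<Sum>a\<in>UNIV. pd G a ?x * ?w $ a) = 0"
    proof (rule alg1[where A="\<lambda>N. c3 (?K N) ?x ?w" and E="\<lambda>N. KQ (?K N) ?x ?w ?P"
          and B="\<lambda>N. c2 (L2 N) ?x ?w" and F="\<lambda>N. TQ (L2 N) ?x ?w ?P" and H="\<lambda>N. c1 (L1 N) ?x ?w"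
          and Sv="\<lambda>N. SQ (L1 N) ?x ?P" and Wc="\<lambda>N. c2 (\<lambda>x a b. sym2 (cd1 g (L1 N) x) a b) ?x ?w"
          and Pd="\<lambda>N. \<Sum>a\<in>UNIV. pd (\<lambda>y. SQ (L1 N) y (Q y)) a ?x * ?w $ a", OF l])
      show "c3 (?K (2*l)) ?x ?w = 0" by (rule killing2_c3[OF HK2 xU])
    next
      fix j assume j: "j < l"
      have e: "2*j+2-1 = 2*j+1" "2*j+2-2 = 2*j" by simp_all
      have "\<And>a b. sym2 (cd1 g (L1 (2*j+1)) ?x) a b = - (3 / real (2*j+1)) * (\<Sum>c\<in>UNIV. ?K (2*j) ?x a b c * ?P $ c)
                - real (2*j+2) * L2 (2*j+2) ?x a b"
        using HW[of "2*j+2" ?x] j xU unfolding e by simp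
      then show "c2 (\<lambda>x a b. sym2 (cd1 g (L1 (2*j+1)) x) a b) ?x ?w
          = - (3 / real (2*j+1)) * KQ (?K (2*j)) ?x ?w ?P - real (2*j+2) * c2 (L2 (2*j+2)) ?x ?w"
        unfolding c2_def[of "\<lambda>x a b. sym2 (cd1 g (L1 (2*j+1)) x) a b"] by (rule lin2)
    next
      have "\<And>a. pd (\<lambda>y. SQ (L1 (2*l-1)) y (Q y)) a ?x = 4 * real l * (\<Sum>b\<in>UNIV. L2 (2*l) ?x a b * ?P $ b) - 0 * L1 0 ?x a"
        unfolding SQ_def using HPl[OF xU] by simp
      from lin1[where T="L2 (2*l)" and W="L1 0" and x="?x" and P="?P", OF this] show "(\<Sum>a\<in>UNIV. pd (\<lambda>y. SQ (L1 (2*l-1)) y (Q y)) a ?x * ?w $ a) = 4 * real l * TQ (L2 (2*l)) ?x ?w ?P"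
        by simp
    next
      fix j assume j: "Suc j < l"
      have e: "2*j+3-2 = 2*j+1" "2*j+3-1 = 2*j+2" by simp_all
      have "\<And>a. pd (\<lambda>y. SQ (L1 (2*j+1)) y (Q y)) a ?x = 2 * real (2*j+2) * (\<Sum>b\<in>UNIV. L2 (2*j+2) ?x a b * ?P $ b)
                - (real (2*j+3) * real (2*j+2)) * L1 (2*j+3) ?x a"
        unfolding SQ_def using HPk[of "2*j+3" ?x] j xU unfolding e by simp
      from lin1[where T="L2 (2*j+2)" and W="L1 (2*j+3)" and x="?x" and P="?P", OF this] show "(\<Sum>a\<in>UNIV. pd (\<lambda>y. SQ (L1 (2*j+1)) y (Q y)) a ?x * ?w $ a)
          = 2 * real (2*j+2) * TQ (L2 (2*j+2)) ?x ?w ?P - real (2*j+3) * real (2*j+2) * c1 (L1 (2*j+3)) ?x ?w"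
        by simp
    next
      have "\<And>a. pd G a ?x = 2 * (\<Sum>b\<in>UNIV. L2 0 ?x a b * ?P $ b) - 1 * L1 1 ?x a"
        using HGd[OF xU] by simp
      from lin1[where T="L2 0" and W="L1 1" and x="?x" and P="?P", OF this] show "(\<Sum>a\<in>UNIV. pd G a ?x * ?w $ a) = 2 * TQ (L2 0) ?x ?w ?P - c1 (L1 1) ?x ?w"
        by simp
    qed
    have "((\<lambda>s. - (\<Sum>j<l. s^(2*j+1) / real (2*j+1) * c3 (?K (2*j)) (q s) (v s))
            + (\<Sum>j\<le>l. s^(2*j) * c2 (L2 (2*j)) (q s) (v s))
            + (\<Sum>j\<in>{1..l}. s^(2*j-1) * c1 (L1 (2*j-1)) (q s) (v s))
            + (\<Sum>j\<in>{1..l}. s^(2*j) / real (2*j) * SQ (L1 (2*j-1)) (q s) (Q (q s)))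
            + G (q s)) has_real_derivative 0) (at t)"
      by (rule DERIV_cong[OF DERIV_add[OF DERIV_add[OF DERIV_add[OF DERIV_add[OF DERIV_minus[OF d1] d2] d3] d4] d5]])
         (rule alg)
    then show "((\<lambda>s. - (\<Sum>j<l. s^(2*j+1) / real (2*j+1) *
                 (\<Sum>a\<in>UNIV. \<Sum>b\<in>UNIV. \<Sum>c\<in>UNIV. symcd2 g (L2 (2*j)) (q s) a b c * v s $a * v s $b * v s $c))
            + (\<Sum>j\<le>l. s^(2*j) * (\<Sum>a\<in>UNIV. \<Sum>b\<in>UNIV. L2 (2*j) (q s) a b * v s $a * v s $b))
            + (\<Sum>j\<in>{1..l}. s^(2*j-1) * (\<Sum>a\<in>UNIV. L1 (2*j-1) (q s) a * v s $a))
            + (\<Sum>j\<in>{1..l}. s^(2*j) / real (2*j) * (\<Sum>c\<in>UNIV. L1 (2*j-1) (q s) c * Q (q s) $ c))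
            + G (q s)) has_real_derivative 0) (at t)"
      unfolding c1_def c2_def c3_def SQ_def .
  qed
qed


lemma cubic_split:
  fixes C :: "real^'n::finite \<Rightarrow> 'n \<Rightarrow> 'n \<Rightarrow> 'n \<Rightarrow> real"
  shows "(\<Sum>a\<in>UNIV. \<Sum>b\<in>UNIV. \<Sum>c\<in>UNIV. (C x a b c - (\<Sum>j\<in>S. f j * D j x a b c)) * w$a * w$b * w$c)
     = c3 C x w - (\<Sum>j\<in>S. f j * c3 (D j) x w)"
proof -
  have "(\<Sum>a\<in>UNIV. \<Sum>b\<in>UNIV. \<Sum>c\<in>UNIV. (\<Sum>j\<in>S. f j * D j x a b c) * w$a * w$b * w$c)
      = (\<Sum>a\<in>UNIV. \<Sum>b\<in>UNIV. \<Sum>c\<in>UNIV. \<Sum>j\<in>S. f j * (D j x a b c * w$a * w$b * w$c))"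
    by (simp add: sum_distrib_right sum_distrib_left mult_ac)
  also have "\<dots> = (\<Sum>j\<in>S. \<Sum>a\<in>UNIV. \<Sum>b\<in>UNIV. \<Sum>c\<in>UNIV. f j * (D j x a b c * w$a * w$b * w$c))"
    by (simp only: sum.swap[where B=S])
  also have "\<dots> = (\<Sum>j\<in>S. f j * c3 (D j) x w)"
    unfolding c3_def by (simp add: sum_distrib_left)
  finally have *: "(\<Sum>a\<in>UNIV. \<Sum>b\<in>UNIV. \<Sum>c\<in>UNIV. (\<Sum>j\<in>S. f j * D j x a b c) * w$a * w$b * w$c)
      = (\<Sum>j\<in>S. f j * c3 (D j) x w)" .
  show ?thesis unfolding c3_def[of C] * [symmetric]
    by (simp add: left_diff_distrib sum_subtractf)
qed

lemma cfi2:
  fixes U :: "(real^'n::finite) set"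
    and g :: "real^'n \<Rightarrow> real^'n^'n"
    and Q :: "real^'n \<Rightarrow> real^'n"
  assumes metric: "metric_on U g"
    and Qsmooth: "smooth1 U (\<lambda>x a. Q x $ a)"
  shows
   "(\<forall>(l::nat) (L3 :: real^'n \<Rightarrow> 'n \<Rightarrow> 'n \<Rightarrow> 'n \<Rightarrow> real)
       (L2 :: nat \<Rightarrow> real^'n \<Rightarrow> 'n \<Rightarrow> 'n \<Rightarrow> real) (L1 :: nat \<Rightarrow> real^'n \<Rightarrow> 'n \<Rightarrow> real).
      smooth3 U L3 \<and> killing3 U g L3
      \<and> (\<forall>N. odd N \<and> N \<le> 2*l+1 \<longrightarrow> smooth2 U (L2 N) \<and> (\<forall>x\<in>U. \<forall>a b. L2 N x a b = L2 N x b a))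
      \<and> (\<forall>N. odd N \<and> N + 1 \<le> 2*l \<longrightarrow> killing3 U g (symcd2 g (L2 N)))
      \<and> killing2 U g (L2 (2*l+1))
      \<and> (\<forall>A. even A \<and> A \<le> 2*l \<longrightarrow> smooth1 U (L1 A))
      \<and> (\<forall>x\<in>U. \<forall>a b. sym2 (cd1 g (L1 0) x) a b
            = 3 * (\<Sum>c\<in>UNIV. L3 x a b c * Q x $ c) - L2 1 x a b)
      \<and> (\<forall>k. odd k \<and> 3 \<le> k \<and> k \<le> 2*l+1 \<longrightarrow> (\<forall>x\<in>U. \<forall>a b.
            sym2 (cd1 g (L1 (k-1)) x) a b
              = - (3 / real (k-1)) * (\<Sum>c\<in>UNIV. symcd2 g (L2 (k-2)) x a b c * Q x $ c)
                - real k * L2 k x a b))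
      \<and> (\<forall>x\<in>U. \<forall>a. pd (\<lambda>y. \<Sum>c\<in>UNIV. L1 (2*l) y c * Q y $ c) a x
            = 2 * real (2*l+1) * (\<Sum>b\<in>UNIV. L2 (2*l+1) x a b * Q x $ b))
      \<and> (\<forall>k. even k \<and> 2 \<le> k \<and> k \<le> 2*l \<longrightarrow> (\<forall>x\<in>U. \<forall>a.
            pd (\<lambda>y. \<Sum>c\<in>UNIV. L1 (k-2) y c * Q y $ c) a x
              = 2 * real (k-1) * (\<Sum>b\<in>UNIV. L2 (k-1) x a b * Q x $ b)
                - real k * real (k-1) * L1 k x a))
      \<longrightarrow> first_integral U g Q (\<lambda>t x v.
            (\<Sum>a\<in>UNIV. \<Sum>b\<in>UNIV. \<Sum>c\<in>UNIV.
               (L3 x a b c - (\<Sum>j\<in>{1..l}. t^(2*j) / real (2*j) * symcd2 g (L2 (2*j-1)) x a b c))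
               * v$a * v$b * v$c)
            + (\<Sum>j\<le>l. t^(2*j+1) * (\<Sum>a\<in>UNIV. \<Sum>b\<in>UNIV. L2 (2*j+1) x a b * v$a * v$b))
            + (\<Sum>j\<le>l. t^(2*j) * (\<Sum>a\<in>UNIV. L1 (2*j) x a * v$a))
            + (\<Sum>j\<le>l. t^(2*j+1) / real (2*j+1) * (\<Sum>c\<in>UNIV. L1 (2*j) x c * Q x $ c))))"
proof (intro allI impI)
  fix l :: nat and L3 :: "real^'n \<Rightarrow> 'n \<Rightarrow> 'n \<Rightarrow> 'n \<Rightarrow> real"
    and L2 :: "nat \<Rightarrow> real^'n \<Rightarrow> 'n \<Rightarrow> 'n \<Rightarrow> real" and L1 :: "nat \<Rightarrow> real^'n \<Rightarrow> 'n \<Rightarrow> real"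
  assume H: "smooth3 U L3 \<and> killing3 U g L3
      \<and> (\<forall>N. odd N \<and> N \<le> 2*l+1 \<longrightarrow> smooth2 U (L2 N) \<and> (\<forall>x\<in>U. \<forall>a b. L2 N x a b = L2 N x b a))
      \<and> (\<forall>N. odd N \<and> N + 1 \<le> 2*l \<longrightarrow> killing3 U g (symcd2 g (L2 N)))
      \<and> killing2 U g (L2 (2*l+1))
      \<and> (\<forall>A. even A \<and> A \<le> 2*l \<longrightarrow> smooth1 U (L1 A))
      \<and> (\<forall>x\<in>U. \<forall>a b. sym2 (cd1 g (L1 0) x) a b
            = 3 * (\<Sum>c\<in>UNIV. L3 x a b c * Q x $ c) - L2 1 x a b)
      \<and> (\<forall>k. odd k \<and> 3 \<le> k \<and> k \<le> 2*l+1 \<longrightarrow> (\<forall>x\<in>U. \<forall>a b.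
            sym2 (cd1 g (L1 (k-1)) x) a b
              = - (3 / real (k-1)) * (\<Sum>c\<in>UNIV. symcd2 g (L2 (k-2)) x a b c * Q x $ c)
                - real k * L2 k x a b))
      \<and> (\<forall>x\<in>U. \<forall>a. pd (\<lambda>y. \<Sum>c\<in>UNIV. L1 (2*l) y c * Q y $ c) a x
            = 2 * real (2*l+1) * (\<Sum>b\<in>UNIV. L2 (2*l+1) x a b * Q x $ b))
      \<and> (\<forall>k. even k \<and> 2 \<le> k \<and> k \<le> 2*l \<longrightarrow> (\<forall>x\<in>U. \<forall>a.
            pd (\<lambda>y. \<Sum>c\<in>UNIV. L1 (k-2) y c * Q y $ c) a x
              = 2 * real (k-1) * (\<Sum>b\<in>UNIV. L2 (k-1) x a b * Q x $ b)
                - real k * real (k-1) * L1 k x a))"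
  note HL3s = H[THEN conjunct1]
  note HL3k = H[THEN conjunct2, THEN conjunct1]
  note HL2 = H[THEN conjunct2, THEN conjunct2, THEN conjunct1, rule_format]
  note HK = H[THEN conjunct2, THEN conjunct2, THEN conjunct2, THEN conjunct1, rule_format]
  note HK2 = H[THEN conjunct2, THEN conjunct2, THEN conjunct2, THEN conjunct2, THEN conjunct1]
  note HL1 = H[THEN conjunct2, THEN conjunct2, THEN conjunct2, THEN conjunct2, THEN conjunct2, THEN conjunct1, rule_format]
  note HW0 = H[THEN conjunct2, THEN conjunct2, THEN conjunct2, THEN conjunct2, THEN conjunct2, THEN conjunct2, THEN conjunct1, rule_format]
  note HW = H[THEN conjunct2, THEN conjunct2, THEN conjunct2, THEN conjunct2, THEN conjunct2, THEN conjunct2, THEN conjunct2, THEN conjunct1, rule_format]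
  note HPl = H[THEN conjunct2, THEN conjunct2, THEN conjunct2, THEN conjunct2, THEN conjunct2, THEN conjunct2, THEN conjunct2, THEN conjunct2, THEN conjunct1, rule_format]
  note HPk = H[THEN conjunct2, THEN conjunct2, THEN conjunct2, THEN conjunct2, THEN conjunct2, THEN conjunct2, THEN conjunct2, THEN conjunct2, THEN conjunct2, rule_format]
  show "first_integral U g Q (\<lambda>t x v.
            (\<Sum>a\<in>UNIV. \<Sum>b\<in>UNIV. \<Sum>c\<in>UNIV.
               (L3 x a b c - (\<Sum>j\<in>{1..l}. t^(2*j) / real (2*j) * symcd2 g (L2 (2*j-1)) x a b c))
               * v$a * v$b * v$c)
            + (\<Sum>j\<le>l. t^(2*j+1) * (\<Sum>a\<in>UNIV. \<Sum>b\<in>UNIV. L2 (2*j+1) x a b * v$a * v$b))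
            + (\<Sum>j\<le>l. t^(2*j) * (\<Sum>a\<in>UNIV. L1 (2*j) x a * v$a))
            + (\<Sum>j\<le>l. t^(2*j+1) / real (2*j+1) * (\<Sum>c\<in>UNIV. L1 (2*j) x c * Q x $ c)))"
    unfolding first_integral_def
  proof (intro allI impI ballI)
    fix I q v t assume sI: "is_solution U g Q I q v" and tI: "t \<in> I"
    have S: "sol U g Q q v t" by (rule solI[OF metric Qsmooth sI tI])
    note xU = sol.xU[OF S]
    let ?x = "q t" and ?w = "v t" and ?P = "Q (q t)"
    let ?K = "\<lambda>N. symcd2 g (L2 N)"
    have d0: "((\<lambda>s. c3 L3 (q s) (v s)) has_real_derivative (-3 * KQ L3 ?x ?w ?P)) (at t)"
      by (rule sol.dK[OF S, OF HL3k]) (rule smooth3_diff[OF HL3s xU])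
    have d1: "((\<lambda>s. \<Sum>j\<in>{1..l}. s^(2*j) / real (2*j) * c3 (?K (2*j-1)) (q s) (v s)) has_real_derivative
       (\<Sum>j\<in>{1..l}. real (2*j) * t^(2*j-1) / real (2*j) * c3 (?K (2*j-1)) ?x ?w
            + t^(2*j) / real (2*j) * (-3 * KQ (?K (2*j-1)) ?x ?w ?P))) (at t)"
    proof (rule DERIV_sum, rule DERIV_pc, rule sol.dK[OF S])
      fix j assume "j \<in> {1..l}"
      then have j: "1 \<le> j" "j \<le> l" by auto
      show "killing3 U g (?K (2*j-1))" using j by (intro HK) auto
      have "smooth2 U (L2 (2*j-1))" using HL2[of "2*j-1"] j by auto
      then show "\<And>a b c. (\<lambda>y. ?K (2*j-1) y a b c) differentiable (at ?x)"
        by (intro symcd2_diff[OF metric xU])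
    qed
    have d2: "((\<lambda>s. \<Sum>j\<le>l. s^(2*j+1) * c2 (L2 (2*j+1)) (q s) (v s)) has_real_derivative
       (\<Sum>j\<le>l. real (2*j+1) * t^(2*j+1-1) * c2 (L2 (2*j+1)) ?x ?w
            + t^(2*j+1) * (c3 (?K (2*j+1)) ?x ?w - 2 * TQ (L2 (2*j+1)) ?x ?w ?P))) (at t)"
    proof (rule DERIV_sum, rule DERIV_p, rule sol.dT[OF S])
      fix j assume "j \<in> {..l}"
      then have j: "j \<le> l" by simp
      have h: "smooth2 U (L2 (2*j+1)) \<and> (\<forall>x\<in>U. \<forall>a b. L2 (2*j+1) x a b = L2 (2*j+1) x b a)"
        using j by (intro HL2) auto
      fix a b
      show "L2 (2*j+1) ?x a b = L2 (2*j+1) ?x b a" using h xU by auto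
      show "(\<lambda>y. L2 (2*j+1) y a b) differentiable (at ?x)"
        using h xU by (auto intro: smooth2_diff)
    qed
    have d3: "((\<lambda>s. \<Sum>j\<le>l. s^(2*j) * c1 (L1 (2*j)) (q s) (v s)) has_real_derivative
       (\<Sum>j\<le>l. real (2*j) * t^(2*j-1) * c1 (L1 (2*j)) ?x ?w
            + t^(2*j) * (c2 (\<lambda>x a b. sym2 (cd1 g (L1 (2*j)) x) a b) ?x ?w - SQ (L1 (2*j)) ?x ?P))) (at t)"
    proof (rule DERIV_sum, rule DERIV_p, rule sol.dW[OF S])
      fix j a assume "j \<in> {..l}"
      then have "smooth1 U (L1 (2*j))" by (intro HL1) auto
      then show "(\<lambda>y. L1 (2*j) y a) differentiable (at ?x)" by (rule smooth1_diff[OF _ xU])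
    qed
    have d4: "((\<lambda>s. \<Sum>j\<le>l. s^(2*j+1) / real (2*j+1) * SQ (L1 (2*j)) (q s) (Q (q s))) has_real_derivative
       (\<Sum>j\<le>l. real (2*j+1) * t^(2*j+1-1) / real (2*j+1) * SQ (L1 (2*j)) ?x ?P
            + t^(2*j+1) / real (2*j+1) * (\<Sum>a\<in>UNIV. pd (\<lambda>y. SQ (L1 (2*j)) y (Q y)) a ?x * ?w $ a))) (at t)"
    proof (rule DERIV_sum, rule DERIV_pc, rule sol.dS[OF S])
      fix j a assume "j \<in> {..l}"
      then have "smooth1 U (L1 (2*j))" by (intro HL1) auto
      then show "(\<lambda>y. L1 (2*j) y a) differentiable (at ?x)" by (rule smooth1_diff[OF _ xU])
    qed
    have alg: "(-3 * KQ L3 ?x ?w ?P) - (\<Sum>j\<in>{1..l}. real (2*j) * t^(2*j-1) / real (2*j) * c3 (?K (2*j-1)) ?x ?w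
            + t^(2*j) / real (2*j) * (-3 * KQ (?K (2*j-1)) ?x ?w ?P))
     + (\<Sum>j\<le>l. real (2*j+1) * t^(2*j+1-1) * c2 (L2 (2*j+1)) ?x ?w
            + t^(2*j+1) * (c3 (?K (2*j+1)) ?x ?w - 2 * TQ (L2 (2*j+1)) ?x ?w ?P))
     + (\<Sum>j\<le>l. real (2*j) * t^(2*j-1) * c1 (L1 (2*j)) ?x ?w
            + t^(2*j) * (c2 (\<lambda>x a b. sym2 (cd1 g (L1 (2*j)) x) a b) ?x ?w - SQ (L1 (2*j)) ?x ?P))
     + (\<Sum>j\<le>l. real (2*j+1) * t^(2*j+1-1) / real (2*j+1) * SQ (L1 (2*j)) ?x ?P
            + t^(2*j+1) / real (2*j+1) * (\<Sum>a\<in>UNIV. pd (\<lambda>y. SQ (L1 (2*j)) y (Q y)) a ?x * ?w $ a)) = 0"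
    proof (rule alg2[where A="\<lambda>N. c3 (?K N) ?x ?w" and E="\<lambda>N. KQ (?K N) ?x ?w ?P"
          and B="\<lambda>N. c2 (L2 N) ?x ?w" and F="\<lambda>N. TQ (L2 N) ?x ?w ?P" and H="\<lambda>N. c1 (L1 N) ?x ?w"
          and Sv="\<lambda>N. SQ (L1 N) ?x ?P" and Wc="\<lambda>N. c2 (\<lambda>x a b. sym2 (cd1 g (L1 N) x) a b) ?x ?w"
          and Pd="\<lambda>N. \<Sum>a\<in>UNIV. pd (\<lambda>y. SQ (L1 N) y (Q y)) a ?x * ?w $ a" and Ec="KQ L3 ?x ?w ?P"])
      show "c3 (?K (2*l+1)) ?x ?w = 0" by (rule killing2_c3[OF HK2 xU])
    next
      have h: "\<And>a b. sym2 (cd1 g (L1 0) ?x) a b = 3 * (\<Sum>c\<in>UNIV. L3 ?x a b c * ?P $ c) - 1 * L2 1 ?x a b"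
        using HW0[OF xU] by simp
      from lin2[where M="\<lambda>a b. sym2 (cd1 g (L1 0) ?x) a b" and C=L3 and T="L2 1" and x="?x" and P="?P" and w="?w", OF h]
      show "c2 (\<lambda>x a b. sym2 (cd1 g (L1 0) x) a b) ?x ?w = 3 * KQ L3 ?x ?w ?P - c2 (L2 1) ?x ?w"
        unfolding c2_def[of "\<lambda>x a b. sym2 (cd1 g (L1 0) x) a b"] by simp
    next
      fix j assume j: "1 \<le> j" "j \<le> l"
      have e: "2*j+1-1 = 2*j" "2*j+1-2 = 2*j-1" by simp_all
      have "\<And>a b. sym2 (cd1 g (L1 (2*j)) ?x) a b = - (3 / real (2*j)) * (\<Sum>c\<in>UNIV. ?K (2*j-1) ?x a b c * ?P $ c)
                - real (2*j+1) * L2 (2*j+1) ?x a b"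
        using HW[of "2*j+1" ?x] j xU unfolding e by simp
      then show "c2 (\<lambda>x a b. sym2 (cd1 g (L1 (2*j)) x) a b) ?x ?w
          = - (3 / real (2*j)) * KQ (?K (2*j-1)) ?x ?w ?P - real (2*j+1) * c2 (L2 (2*j+1)) ?x ?w"
        unfolding c2_def[of "\<lambda>x a b. sym2 (cd1 g (L1 (2*j)) x) a b"] by (rule lin2)
    next
      have "\<And>a. pd (\<lambda>y. SQ (L1 (2*l)) y (Q y)) a ?x = 2 * real (2*l+1) * (\<Sum>b\<in>UNIV. L2 (2*l+1) ?x a b * ?P $ b) - 0 * L1 0 ?x a"
        unfolding SQ_def using HPl[OF xU] by simp
      from lin1[where T="L2 (2*l+1)" and W="L1 0" and x="?x" and P="?P", OF this]
      show "(\<Sum>a\<in>UNIV. pd (\<lambda>y. SQ (L1 (2*l)) y (Q y)) a ?x * ?w $ a) = 2 * real (2*l+1) * TQ (L2 (2*l+1)) ?x ?w ?P"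
        by simp
    next
      fix j assume j: "j < l"
      have e: "2*j+2-2 = 2*j" "2*j+2-1 = 2*j+1" by simp_all
      have "\<And>a. pd (\<lambda>y. SQ (L1 (2*j)) y (Q y)) a ?x = 2 * real (2*j+1) * (\<Sum>b\<in>UNIV. L2 (2*j+1) ?x a b * ?P $ b)
                - (real (2*j+2) * real (2*j+1)) * L1 (2*j+2) ?x a"
        unfolding SQ_def using HPk[of "2*j+2" ?x] j xU unfolding e by simp
      from lin1[where T="L2 (2*j+1)" and W="L1 (2*j+2)" and x="?x" and P="?P", OF this]
      show "(\<Sum>a\<in>UNIV. pd (\<lambda>y. SQ (L1 (2*j)) y (Q y)) a ?x * ?w $ a)
          = 2 * real (2*j+1) * TQ (L2 (2*j+1)) ?x ?w ?P - real (2*j+2) * real (2*j+1) * c1 (L1 (2*j+2)) ?x ?w"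
        by simp
    qed
    have e1: "\<And>s. (\<Sum>a\<in>UNIV. \<Sum>b\<in>UNIV. \<Sum>c\<in>UNIV.
               (L3 (q s) a b c - (\<Sum>j\<in>{1..l}. s^(2*j) / real (2*j) * symcd2 g (L2 (2*j-1)) (q s) a b c))
               * v s $a * v s $b * v s $c)
       = c3 L3 (q s) (v s) - (\<Sum>j\<in>{1..l}. s^(2*j) / real (2*j) * c3 (?K (2*j-1)) (q s) (v s))"
      by (rule cubic_split[where D="\<lambda>j. ?K (2*j-1)" and f="\<lambda>j. s^(2*j) / real (2*j)" for s])
    have "((\<lambda>s. (c3 L3 (q s) (v s) - (\<Sum>j\<in>{1..l}. s^(2*j) / real (2*j) * c3 (?K (2*j-1)) (q s) (v s)))
            + (\<Sum>j\<le>l. s^(2*j+1) * c2 (L2 (2*j+1)) (q s) (v s))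
            + (\<Sum>j\<le>l. s^(2*j) * c1 (L1 (2*j)) (q s) (v s))
            + (\<Sum>j\<le>l. s^(2*j+1) / real (2*j+1) * SQ (L1 (2*j)) (q s) (Q (q s)))) has_real_derivative 0) (at t)"
      by (rule DERIV_cong[OF DERIV_add[OF DERIV_add[OF DERIV_add[OF DERIV_diff[OF d0 d1] d2] d3] d4]])
         (rule alg)
    then show "((\<lambda>s. (\<Sum>a\<in>UNIV. \<Sum>b\<in>UNIV. \<Sum>c\<in>UNIV.
               (L3 (q s) a b c - (\<Sum>j\<in>{1..l}. s^(2*j) / real (2*j) * symcd2 g (L2 (2*j-1)) (q s) a b c))
               * v s $a * v s $b * v s $c)
            + (\<Sum>j\<le>l. s^(2*j+1) * (\<Sum>a\<in>UNIV. \<Sum>b\<in>UNIV. L2 (2*j+1) (q s) a b * v s $a * v s $b))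
            + (\<Sum>j\<le>l. s^(2*j) * (\<Sum>a\<in>UNIV. L1 (2*j) (q s) a * v s $a))
            + (\<Sum>j\<le>l. s^(2*j+1) / real (2*j+1) * (\<Sum>c\<in>UNIV. L1 (2*j) (q s) c * Q (q s) $ c))) has_real_derivative 0) (at t)"
      unfolding e1 unfolding c1_def c2_def SQ_def .
  qed
qed


theorem theorem1:
  fixes U :: "(real^'n::finite) set"
    and g :: "real^'n \<Rightarrow> real^'n^'n"
    and Q :: "real^'n \<Rightarrow> real^'n"
  assumes metric: "metric_on U g"
    and Qsmooth: "smooth1 U (\<lambda>x a. Q x $ a)"
  shows
   "(\<forall>(l::nat) (L2 :: nat \<Rightarrow> real^'n \<Rightarrow> 'n \<Rightarrow> 'n \<Rightarrow> real) (L1 :: nat \<Rightarrow> real^'n \<Rightarrow> 'n \<Rightarrow> real)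
       (G :: real^'n \<Rightarrow> real).
      l \<ge> 1
      \<and> (\<forall>N. even N \<and> N \<le> 2*l \<longrightarrow> smooth2 U (L2 N) \<and> (\<forall>x\<in>U. \<forall>a b. L2 N x a b = L2 N x b a))
      \<and> (\<forall>N. even N \<and> N \<le> 2*l - 2 \<longrightarrow> killing3 U g (symcd2 g (L2 N)))
      \<and> killing2 U g (L2 (2*l))
      \<and> (\<forall>A. odd A \<and> A \<le> 2*l - 1 \<longrightarrow> smooth1 U (L1 A))
      \<and> smooth_on_chart U G
      \<and> (\<forall>k. even k \<and> 2 \<le> k \<and> k \<le> 2*l \<longrightarrow> (\<forall>x\<in>U. \<forall>a b.
            sym2 (cd1 g (L1 (k-1)) x) a b
              = - (3 / real (k-1)) * (\<Sum>c\<in>UNIV. symcd2 g (L2 (k-2)) x a b c * Q x $ c)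
                - real k * L2 k x a b))
      \<and> (\<forall>x\<in>U. \<forall>a. pd (\<lambda>y. \<Sum>c\<in>UNIV. L1 (2*l-1) y c * Q y $ c) a x
            = 4 * real l * (\<Sum>b\<in>UNIV. L2 (2*l) x a b * Q x $ b))
      \<and> (\<forall>k. odd k \<and> 3 \<le> k \<and> k \<le> 2*l - 1 \<longrightarrow> (\<forall>x\<in>U. \<forall>a.
            pd (\<lambda>y. \<Sum>c\<in>UNIV. L1 (k-2) y c * Q y $ c) a x
              = 2 * real (k-1) * (\<Sum>b\<in>UNIV. L2 (k-1) x a b * Q x $ b)
                - real k * real (k-1) * L1 k x a))
      \<and> (\<forall>x\<in>U. \<forall>a. pd G a x = 2 * (\<Sum>b\<in>UNIV. L2 0 x a b * Q x $ b) - L1 1 x a)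
      \<longrightarrow> first_integral U g Q (\<lambda>t x v.
            - (\<Sum>j<l. t^(2*j+1) / real (2*j+1) *
                 (\<Sum>a\<in>UNIV. \<Sum>b\<in>UNIV. \<Sum>c\<in>UNIV. symcd2 g (L2 (2*j)) x a b c * v$a * v$b * v$c))
            + (\<Sum>j\<le>l. t^(2*j) * (\<Sum>a\<in>UNIV. \<Sum>b\<in>UNIV. L2 (2*j) x a b * v$a * v$b))
            + (\<Sum>j\<in>{1..l}. t^(2*j-1) * (\<Sum>a\<in>UNIV. L1 (2*j-1) x a * v$a))
            + (\<Sum>j\<in>{1..l}. t^(2*j) / real (2*j) * (\<Sum>c\<in>UNIV. L1 (2*j-1) x c * Q x $ c))
            + G x))
  \<and>
   (\<forall>(l::nat) (L3 :: real^'n \<Rightarrow> 'n \<Rightarrow> 'n \<Rightarrow> 'n \<Rightarrow> real)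
       (L2 :: nat \<Rightarrow> real^'n \<Rightarrow> 'n \<Rightarrow> 'n \<Rightarrow> real) (L1 :: nat \<Rightarrow> real^'n \<Rightarrow> 'n \<Rightarrow> real).
      smooth3 U L3 \<and> killing3 U g L3
      \<and> (\<forall>N. odd N \<and> N \<le> 2*l+1 \<longrightarrow> smooth2 U (L2 N) \<and> (\<forall>x\<in>U. \<forall>a b. L2 N x a b = L2 N x b a))
      \<and> (\<forall>N. odd N \<and> N + 1 \<le> 2*l \<longrightarrow> killing3 U g (symcd2 g (L2 N)))
      \<and> killing2 U g (L2 (2*l+1))
      \<and> (\<forall>A. even A \<and> A \<le> 2*l \<longrightarrow> smooth1 U (L1 A))
      \<and> (\<forall>x\<in>U. \<forall>a b. sym2 (cd1 g (L1 0) x) a b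
            = 3 * (\<Sum>c\<in>UNIV. L3 x a b c * Q x $ c) - L2 1 x a b)
      \<and> (\<forall>k. odd k \<and> 3 \<le> k \<and> k \<le> 2*l+1 \<longrightarrow> (\<forall>x\<in>U. \<forall>a b.
            sym2 (cd1 g (L1 (k-1)) x) a b
              = - (3 / real (k-1)) * (\<Sum>c\<in>UNIV. symcd2 g (L2 (k-2)) x a b c * Q x $ c)
                - real k * L2 k x a b))
      \<and> (\<forall>x\<in>U. \<forall>a. pd (\<lambda>y. \<Sum>c\<in>UNIV. L1 (2*l) y c * Q y $ c) a x
            = 2 * real (2*l+1) * (\<Sum>b\<in>UNIV. L2 (2*l+1) x a b * Q x $ b))
      \<and> (\<forall>k. even k \<and> 2 \<le> k \<and> k \<le> 2*l \<longrightarrow> (\<forall>x\<in>U. \<forall>a.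
            pd (\<lambda>y. \<Sum>c\<in>UNIV. L1 (k-2) y c * Q y $ c) a x
              = 2 * real (k-1) * (\<Sum>b\<in>UNIV. L2 (k-1) x a b * Q x $ b)
                - real k * real (k-1) * L1 k x a))
      \<longrightarrow> first_integral U g Q (\<lambda>t x v.
            (\<Sum>a\<in>UNIV. \<Sum>b\<in>UNIV. \<Sum>c\<in>UNIV.
               (L3 x a b c - (\<Sum>j\<in>{1..l}. t^(2*j) / real (2*j) * symcd2 g (L2 (2*j-1)) x a b c))
               * v$a * v$b * v$c)
            + (\<Sum>j\<le>l. t^(2*j+1) * (\<Sum>a\<in>UNIV. \<Sum>b\<in>UNIV. L2 (2*j+1) x a b * v$a * v$b))
            + (\<Sum>j\<le>l. t^(2*j) * (\<Sum>a\<in>UNIV. L1 (2*j) x a * v$a))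
            + (\<Sum>j\<le>l. t^(2*j+1) / real (2*j+1) * (\<Sum>c\<in>UNIV. L1 (2*j) x c * Q x $ c))))
  \<and>
   (\<forall>(lam::real) (L2 :: real^'n \<Rightarrow> 'n \<Rightarrow> 'n \<Rightarrow> real) (L1 :: real^'n \<Rightarrow> 'n \<Rightarrow> real).
      lam \<noteq> 0
      \<and> smooth2 U L2 \<and> (\<forall>x\<in>U. \<forall>a b. L2 x a b = L2 x b a)
      \<and> killing3 U g (symcd2 g L2)
      \<and> smooth1 U L1
      \<and> (\<forall>x\<in>U. \<forall>a b. sym2 (cd1 g L1 x) a b
            = - (3 / lam) * (\<Sum>c\<in>UNIV. symcd2 g L2 x a b c * Q x $ c) - lam * L2 x a b)
      \<and> (\<forall>x\<in>U. \<forall>a. pd (\<lambda>y. \<Sum>c\<in>UNIV. L1 y c * Q y $ c) a x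
            = 2 * lam * (\<Sum>b\<in>UNIV. L2 x a b * Q x $ b) - lam^2 * L1 x a)
      \<longrightarrow> first_integral U g Q (\<lambda>t x v. exp (lam * t) *
            (- (\<Sum>a\<in>UNIV. \<Sum>b\<in>UNIV. \<Sum>c\<in>UNIV. symcd2 g L2 x a b c * v$a * v$b * v$c)
             + lam * (\<Sum>a\<in>UNIV. \<Sum>b\<in>UNIV. L2 x a b * v$a * v$b)
             + lam * (\<Sum>a\<in>UNIV. L1 x a * v$a)
             + (\<Sum>a\<in>UNIV. L1 x a * Q x $ a))))"
    by (rule conjI[OF cfi1[OF metric Qsmooth] conjI[OF cfi2[OF metric Qsmooth] cfi3[OF metric Qsmooth]]])

thm_deps theorem1

end
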